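(* Let $\theta>0$ and $m,k\in\mathbb{N}$. For $n\in\mathbb{N}$ let $a_1,\dots,a_n\in\mathbb{Z}_+\cap[0,m]$ and $h(\sigma)=\sum_{j\le n}a_jk_j(\sigma)$. Then \[ \mathbf{E}_n h(\sigma)_{(k)}=\sum_{u=1}^k\theta^u\sum_{\substack{r_1+\cdots+r_u=k\\ r_i\ge1}}\binom{k-1}{r_1-1}\cdots\binom{k-r_1-\cdots-r_{u-1}-1}{r_u-1}\sum_{\substack{j_1,\dots,j_u\ge1\\ j_1+\cdots+j_u<n}}\frac{(a_{j_1})_{(r_1)}\cdots(a_{j_u})_{(r_u)}}{j_1\cdots j_u}\Big(1-\frac{j_1+\cdots+j_u}{n}\Big)^{\theta-1}+O\Big(\frac{1+\log^k n}{n^{\min\{1,\theta\}}}\Big) \] for $n\ge1$, where the constant in $O(\cdot)$ depends only on $\theta$, $m$ and $k$.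
   Context: $\mathbf{S}_n$ is the symmetric group; $k_j(\sigma)$ is the number of cycles of length $j$ of $\sigma$ and $w(\sigma)$ its number of cycles. The Ewens measure is $\nu_n(A)=\frac{1}{\theta^{(n)}}\sum_{\sigma\in A}\theta^{w(\sigma)}$, $\theta^{(n)}=\theta(\theta+1)\cdots(\theta+n-1)$; $\mathbf{E}_n$ is expectation with respect to $\nu_n$. $x_{(r)}=x(x-1)\cdots(x-r+1)$. *)

theory Defs
  imports "HOL-Analysis.Analysis" "HOL-Combinatorics.Combinatorics"
begin

definition falling :: "real \<Rightarrow> nat \<Rightarrow> real" where
  "falling x r = (\<Prod>i<r. (x - real i))"

definition cycles_of :: "nat \<Rightarrow> (nat \<Rightarrow> nat) \<Rightarrow> nat set set" where
  "cycles_of n \<sigma> = (\<lambda>x. orbit \<sigma> x) ` {1..n}"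

definition cyc_count :: "nat \<Rightarrow> (nat \<Rightarrow> nat) \<Rightarrow> nat \<Rightarrow> nat" where
  "cyc_count n \<sigma> j = card {C \<in> cycles_of n \<sigma>. card C = j}"

definition num_cycles :: "nat \<Rightarrow> (nat \<Rightarrow> nat) \<Rightarrow> nat" where
  "num_cycles n \<sigma> = card (cycles_of n \<sigma>)"

definition ewens_E :: "real \<Rightarrow> nat \<Rightarrow> ((nat \<Rightarrow> nat) \<Rightarrow> real) \<Rightarrow> real" where
  "ewens_E \<theta> n f = (\<Sum>\<sigma>\<in>{\<sigma>. \<sigma> permutes {1..n}}. \<theta> ^ num_cycles n \<sigma> * f \<sigma>) / pochhammer \<theta> n"

definition compositions :: "nat \<Rightarrow> nat \<Rightarrow> nat list set" where
  "compositions k u = {r. length r = u \<and> (\<forall>x\<in>set r. 1 \<le> x) \<and> sum_list r = k}"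

definition index_tuples :: "nat \<Rightarrow> nat \<Rightarrow> nat list set" where
  "index_tuples n u = {js. length js = u \<and> (\<forall>x\<in>set js. 1 \<le> x) \<and> sum_list js < n}"

definition main_term :: "real \<Rightarrow> nat \<Rightarrow> (nat \<Rightarrow> nat) \<Rightarrow> nat \<Rightarrow> real" where
  "main_term \<theta> k a n =
    (\<Sum>u=1..k. \<theta> ^ u *
      (\<Sum>r\<in>compositions k u.
         real (\<Prod>i<u. (k - sum_list (take i r) - 1) choose (r ! i - 1)) *
         (\<Sum>js\<in>index_tuples n u.
            (\<Prod>i<u. falling (real (a (js ! i))) (r ! i) / real (js ! i)) *
            (1 - real (sum_list js) / real n) powr (\<theta> - 1))))"

end

theory Submission
  imports Defs "HOL-Computational_Algebra.Formal_Power_Series"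
begin

definition cyc :: "nat set \<Rightarrow> (nat \<Rightarrow> nat) \<Rightarrow> nat set set" where
  "cyc S \<sigma> = (\<lambda>x. orbit \<sigma> x) ` S"

definition ctype :: "nat set \<Rightarrow> (nat \<Rightarrow> nat) \<Rightarrow> nat multiset" where
  "ctype S \<sigma> = image_mset card (mset_set (cyc S \<sigma>))"

lemma perm_self_orbit:
  assumes "\<sigma> permutes S" "finite S" shows "x \<in> orbit \<sigma> x"
proof -
  have "permutation \<sigma>" using assms by (auto simp: permutation_permutes)
  then show ?thesis by (rule permutation_self_in_orbit)
qed

lemma orbit_same:
  assumes "permutation f" "y \<in> orbit f x" shows "orbit f y = orbit f x"
proof
  show "orbit f y \<subseteq> orbit f x" using orbit_trans[OF _ assms(2)] by blast
  have "x \<in> orbit f y"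
    using orbit_swap[OF permutation_self_in_orbit[OF assms(1)] assms(2)] .
  then show "orbit f x \<subseteq> orbit f y" using orbit_trans[OF _ \<open>x \<in> orbit f y\<close>] by blast
qed

lemma orbit_fixed: "f x = x \<Longrightarrow> orbit f x = {x}"
  using orbit_eq_singleton_iff by metis

lemma finite_cyc: "finite S \<Longrightarrow> finite (cyc S \<sigma>)"
  unfolding cyc_def by simp

lemma cyc_ins_a:
  assumes q: "q permutes S" and fS: "finite S" and aS: "a \<notin> S"
  shows "cyc (insert a S) q = insert {a} (cyc S q)" "{a} \<notin> cyc S q"
proof -
  have "q a = a" using q aS permutes_not_in by metis
  then have "orbit q a = {a}" by (rule orbit_fixed)
  then show "cyc (insert a S) q = insert {a} (cyc S q)" unfolding cyc_def by simp
  show "{a} \<notin> cyc S q"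
  proof
    assume "{a} \<in> cyc S q"
    then obtain x where x: "x \<in> S" "{a} = orbit q x" unfolding cyc_def by auto
    then have "orbit q x \<subseteq> S" using permutes_orbit_subset[OF q] by simp
    with x aS show False by auto
  qed
qed

lemma cyc_ins_b:
  assumes q: "q permutes S" and fS: "finite S" and aS: "a \<notin> S" and bS: "b \<in> S"
  defines "\<sigma> \<equiv> Transposition.transpose a b \<circ> q"
  shows "cyc (insert a S) \<sigma> = insert (insert a (orbit q b)) (cyc S q - {orbit q b})"
    "insert a (orbit q b) \<notin> cyc S q - {orbit q b}"
    "orbit q b \<in> cyc S q"
proof -
  have qa: "q a = a" using q aS permutes_not_in by metis
  have pq: "permutation q" using q fS by (auto simp: permutation_permutes)
  have sp: "\<sigma> permutes insert a S"
    unfolding \<sigma>_def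
  proof (rule permutes_compose)
    show "q permutes insert a S" using q by (rule permutes_subset) blast
    show "Transposition.transpose a b permutes insert a S" using bS by (intro permutes_swap_id) auto
  qed
  have ps: "permutation \<sigma>" using sp fS by (auto simp: permutation_permutes)
  have Ob: "orbit q b \<subseteq> S" by (rule permutes_orbit_subset[OF q bS])
  have bO: "b \<in> orbit q b" using perm_self_orbit[OF q fS] .
  have sa: "\<sigma> a = b" unfolding \<sigma>_def using qa by simp
  have sx: "\<sigma> x = (if q x = b then a else q x)" if "x \<in> S" for x
  proof -
    have "q x \<in> S" using permutes_in_image[OF q] that by simp
    then have "q x \<noteq> a" using aS by auto
    then show ?thesis unfolding \<sigma>_def by (simp add: Transposition.transpose_def)
  qed
  have A1: "insert a (orbit q b) \<subseteq> orbit \<sigma> a"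
  proof -
    have "b \<in> orbit \<sigma> a" using sa orbit.base by metis
    moreover have "y \<in> orbit \<sigma> a" if "y \<in> orbit q b" for y
      using that
    proof induct
      case base
      show ?case
      proof (cases "q b = b")
        case True then show ?thesis using \<open>b \<in> orbit \<sigma> a\<close> by simp
      next
        case False then have "\<sigma> b = q b" using sx bS by simp
        then show ?thesis using \<open>b \<in> orbit \<sigma> a\<close> orbit.step by metis
      qed
    next
      case (step y)
      have yS: "y \<in> S" using step(1) Ob by blast
      show ?case
      proof (cases "q y = b")
        case True then show ?thesis using \<open>b \<in> orbit \<sigma> a\<close> by simp
      next
        case False then have "\<sigma> y = q y" using sx yS by simp
        then show ?thesis using step(2) orbit.step by metis
      qed
    qed
    moreover have "a \<in> orbit \<sigma> a" using permutation_self_in_orbit[OF ps] .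
    ultimately show ?thesis by blast
  qed
  have A2: "orbit \<sigma> a \<subseteq> insert a (orbit q b)"
  proof
    fix y assume "y \<in> orbit \<sigma> a"
    then show "y \<in> insert a (orbit q b)"
    proof induct
      case base then show ?case using sa bO by simp
    next
      case (step y)
      show ?case
      proof (cases "y = a")
        case True then show ?thesis using sa bO by simp
      next
        case False
        then have yO: "y \<in> orbit q b" using step(2) by simp
        then have yS: "y \<in> S" using Ob by blast
        have "q y \<in> orbit q b" using yO by (rule orbit.step)
        then show ?thesis using sx[OF yS] by simp
      qed
    qed
  qed
  have Oa: "orbit \<sigma> a = insert a (orbit q b)" using A1 A2 by blast
  have O1: "orbit \<sigma> y = insert a (orbit q b)" if "y \<in> insert a (orbit q b)" for y
  proof -
    have "y \<in> orbit \<sigma> a" using that Oa by simp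
    then have "orbit \<sigma> y = orbit \<sigma> a" by (rule orbit_same[OF ps])
    then show ?thesis using Oa by simp
  qed
  have O2: "orbit \<sigma> y = orbit q y" if yS: "y \<in> S" and yn: "y \<notin> orbit q b" for y
  proof -
    have disj: "z \<notin> orbit q b" if zy: "z \<in> orbit q y" for z
    proof
      assume zb: "z \<in> orbit q b"
      have "orbit q z = orbit q y" using orbit_same[OF pq zy] .
      moreover have "orbit q z = orbit q b" using orbit_same[OF pq zb] .
      moreover have "y \<in> orbit q y" using perm_self_orbit[OF q fS] .
      ultimately show False using yn by simp
    qed
    have "orbit \<sigma> y = orbit q y"
    proof (rule orbit_cong)
      show "y \<in> orbit q y" using perm_self_orbit[OF q fS] .
      fix s assume s: "s \<in> orbit q y"
      have sS: "s \<in> S" using s permutes_orbit_subset[OF q yS] by blast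
      have "q s \<in> orbit q y" using s orbit.step by metis
      then have "q s \<noteq> b" using disj bO by metis
      then show "\<sigma> s = q s" using sx[OF sS] by simp
    qed
    then show ?thesis .
  qed
  show "orbit q b \<in> cyc S q" unfolding cyc_def using bS by simp
  show "insert a (orbit q b) \<notin> cyc S q - {orbit q b}"
  proof
    assume "insert a (orbit q b) \<in> cyc S q - {orbit q b}"
    then obtain x where x: "x \<in> S" "insert a (orbit q b) = orbit q x" unfolding cyc_def by auto
    then have "orbit q x \<subseteq> S" using permutes_orbit_subset[OF q] by simp
    with x aS show False by auto
  qed
  show "cyc (insert a S) \<sigma> = insert (insert a (orbit q b)) (cyc S q - {orbit q b})"
  proof (rule set_eqI, rule iffI)
    fix C assume "C \<in> cyc (insert a S) \<sigma>"
    then obtain y where y: "y \<in> insert a S" "C = orbit \<sigma> y" unfolding cyc_def by auto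
    show "C \<in> insert (insert a (orbit q b)) (cyc S q - {orbit q b})"
    proof (cases "y \<in> insert a (orbit q b)")
      case True then show ?thesis using O1 y by simp
    next
      case False
      then have yS: "y \<in> S" "y \<notin> orbit q b" using y by auto
      then have "C = orbit q y" using O2 y by simp
      moreover have "orbit q y \<noteq> orbit q b" using yS(2) perm_self_orbit[OF q fS, of y] by auto
      moreover have "orbit q y \<in> cyc S q" unfolding cyc_def using yS(1) by simp
      ultimately show ?thesis by simp
    qed
  next
    fix C assume C: "C \<in> insert (insert a (orbit q b)) (cyc S q - {orbit q b})"
    show "C \<in> cyc (insert a S) \<sigma>"
    proof (cases "C = insert a (orbit q b)")
      case True then have "C = orbit \<sigma> a" using Oa by simp
      then show ?thesis unfolding cyc_def by (intro image_eqI[of _ _ a]) auto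
    next
      case False
      then obtain y where y: "y \<in> S" "C = orbit q y" "C \<noteq> orbit q b" using C unfolding cyc_def by auto
      then have "y \<notin> orbit q b" using orbit_same[OF pq, of y b] by auto
      then have "C = orbit \<sigma> y" using O2 y by simp
      then show ?thesis unfolding cyc_def using y(1) by (intro image_eqI[of _ _ y]) auto
    qed
  qed
qed

lemma ctype_ins_a:
  assumes q: "q permutes S" and fS: "finite S" and aS: "a \<notin> S"
  shows "ctype (insert a S) q = add_mset 1 (ctype S q)"
  unfolding ctype_def cyc_ins_a(1)[OF assms] using cyc_ins_a(2)[OF assms] finite_cyc[OF fS]
  by simp

lemma ctype_ins_b:
  assumes q: "q permutes S" and fS: "finite S" and aS: "a \<notin> S" and bS: "b \<in> S"
  shows "ctype (insert a S) (Transposition.transpose a b \<circ> q) =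
     add_mset (Suc (card (orbit q b))) (ctype S q - {#card (orbit q b)#})"
proof -
  let ?O = "orbit q b"
  have Ob: "?O \<subseteq> S" by (rule permutes_orbit_subset[OF q bS])
  have fO: "finite ?O" using Ob fS finite_subset by auto
  have aO: "a \<notin> ?O" using Ob aS by auto
  have in1: "?O \<in> cyc S q" by (rule cyc_ins_b(3)[OF assms])
  have fc: "finite (cyc S q)" by (rule finite_cyc[OF fS])
  have "mset_set (cyc (insert a S) (Transposition.transpose a b \<circ> q)) =
        add_mset (insert a ?O) (mset_set (cyc S q - {?O}))"
    unfolding cyc_ins_b(1)[OF assms] using cyc_ins_b(2)[OF assms] fc by simp
  also have "mset_set (cyc S q - {?O}) = mset_set (cyc S q) - {#?O#}"
    using mset_set_Diff[of "cyc S q" "{?O}"] in1 fc by simp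
  finally have e: "mset_set (cyc (insert a S) (Transposition.transpose a b \<circ> q)) =
        add_mset (insert a ?O) (mset_set (cyc S q) - {#?O#})" .
  have sub: "{#?O#} \<subseteq># mset_set (cyc S q)" using in1 fc by simp
  show ?thesis unfolding ctype_def e using image_mset_Diff[OF sub, of card] fO aO by simp
qed

definition T :: "nat \<Rightarrow> (nat multiset \<Rightarrow> real) \<Rightarrow> real" where
  "T n G = (\<Sum>\<sigma>\<in>{\<sigma>. \<sigma> permutes {1..n}}. G (ctype {1..n} \<sigma>))"

definition Op :: "(nat multiset \<Rightarrow> real) \<Rightarrow> nat multiset \<Rightarrow> real" where
  "Op G \<mu> = G (add_mset 1 \<mu>) + (\<Sum>j\<in>#\<mu>. real j * G (add_mset (Suc j) (\<mu> - {#j#})))"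

lemma partition_sum:
  assumes q: "q permutes S" and fS: "finite S"
  shows "(\<Sum>b\<in>S. g (card (orbit q b))) = (\<Sum>j\<in>#ctype S q. real j * g j)"
proof -
  have pq: "permutation q" using q fS by (auto simp: permutation_permutes)
  have "(\<Sum>b\<in>S. g (card (orbit q b))) =
     (\<Sum>C\<in>cyc S q. (\<Sum>b\<in>{x. x \<in> S \<and> orbit q x = C}. g (card (orbit q b))))"
    unfolding cyc_def by (rule sum.image_gen[OF fS])
  also have "\<dots> = (\<Sum>C\<in>cyc S q. real (card C) * g (card C))"
  proof (rule sum.cong[OF refl])
    fix C assume "C \<in> cyc S q"
    then obtain y where y: "y \<in> S" "C = orbit q y" unfolding cyc_def by auto
    have CS: "C \<subseteq> S" using y permutes_orbit_subset[OF q] by simp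
    have eq: "{x. x \<in> S \<and> orbit q x = C} = C"
    proof (rule set_eqI, rule iffI)
      fix x assume "x \<in> {x. x \<in> S \<and> orbit q x = C}"
      then have "x \<in> S" "orbit q x = C" by auto
      then show "x \<in> C" using perm_self_orbit[OF q fS, of x] by simp
    next
      fix x assume "x \<in> C"
      then have "orbit q x = C" using orbit_same[OF pq, of x y] y by simp
      then show "x \<in> {x. x \<in> S \<and> orbit q x = C}" using \<open>x \<in> C\<close> CS by auto
    qed
    show "(\<Sum>b\<in>{x. x \<in> S \<and> orbit q x = C}. g (card (orbit q b))) = real (card C) * g (card C)"
    proof -
      have "(\<Sum>b\<in>{x. x \<in> S \<and> orbit q x = C}. g (card (orbit q b))) = (\<Sum>b\<in>C. g (card C))"
      proof (rule sum.cong)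
        show "{x. x \<in> S \<and> orbit q x = C} = C" by (rule eq)
      next
        fix x assume "x \<in> C"
        then have "orbit q x = C" using eq by blast
        then show "g (card (orbit q x)) = g (card C)" by simp
      qed
      then show ?thesis by simp
    qed
  qed
  also have "\<dots> = (\<Sum>j\<in>#ctype S q. real j * g j)"
    unfolding ctype_def sum_unfold_sum_mset by (simp add: multiset.map_comp comp_def)
  finally show ?thesis .
qed

lemma T_0: "T 0 G = G {#}"
proof -
  have "{\<sigma>. \<sigma> permutes ({}::nat set)} = {id}" by (auto simp: permutes_empty)
  moreover have "cyc {} id = {}" unfolding cyc_def by simp
  ultimately show ?thesis unfolding T_def ctype_def by simp
qed

lemma T_Suc: "T (Suc n) G = T n (Op G)"
proof -
  let ?S = "{1..n}" and ?a = "Suc n"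
  have fS: "finite ?S" by simp
  have aS: "?a \<notin> ?S" by simp
  have SS: "{1..Suc n} = insert ?a ?S" by (rule atLeastAtMostSuc_conv) simp
  have "T (Suc n) G = (\<Sum>\<sigma>\<in>{\<sigma>. \<sigma> permutes insert ?a ?S}. G (ctype (insert ?a ?S) \<sigma>))"
    unfolding T_def SS ..
  also have "\<dots> = (\<Sum>b\<in>insert ?a ?S. \<Sum>q\<in>{p. p permutes ?S}. G (ctype (insert ?a ?S) (Transposition.transpose ?a b \<circ> q)))"
    by (rule sum_over_permutations_insert[OF fS aS])
  also have "\<dots> = (\<Sum>q\<in>{p. p permutes ?S}. G (add_mset 1 (ctype ?S q))) +
      (\<Sum>b\<in>?S. \<Sum>q\<in>{p. p permutes ?S}. G (add_mset (Suc (card (orbit q b))) (ctype ?S q - {#card (orbit q b)#})))"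
    using fS aS by (simp add: ctype_ins_a ctype_ins_b)
  also have "(\<Sum>b\<in>?S. \<Sum>q\<in>{p. p permutes ?S}. G (add_mset (Suc (card (orbit q b))) (ctype ?S q - {#card (orbit q b)#})))
     = (\<Sum>q\<in>{p. p permutes ?S}. \<Sum>b\<in>?S. G (add_mset (Suc (card (orbit q b))) (ctype ?S q - {#card (orbit q b)#})))"
    by (rule sum.swap)
  also have "\<dots> = (\<Sum>q\<in>{p. p permutes ?S}. \<Sum>j\<in>#ctype ?S q. real j * G (add_mset (Suc j) (ctype ?S q - {#j#})))"
  proof (rule sum.cong[OF refl])
    fix q assume "q \<in> {p. p permutes ?S}"
    then have q: "q permutes ?S" by simp
    show "(\<Sum>b\<in>?S. G (add_mset (Suc (card (orbit q b))) (ctype ?S q - {#card (orbit q b)#}))) =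
      (\<Sum>j\<in>#ctype ?S q. real j * G (add_mset (Suc j) (ctype ?S q - {#j#})))"
      by (rule partition_sum[OF q fS, of "\<lambda>j. G (add_mset (Suc j) (ctype ?S q - {#j#}))"])
  qed
  finally show ?thesis unfolding T_def Op_def by (simp add: sum.distrib)
qed

lemma falling_gchoose: "falling x k = fact k * (x gchoose k)"
  unfolding falling_def gbinomial_prod_rev by (simp add: atLeast0LessThan)

lemma falling_Suc: "falling x (Suc k) = x * falling (x - 1) k"
  unfolding falling_def prod.lessThan_Suc_shift by (simp add: algebra_simps)

lemma falling_vandermonde:
  "falling (x + y) K = (\<Sum>i=0..K. real (K choose i) * falling x i * falling y (K - i))"
proof -
  have "falling (x + y) K = fact K * (\<Sum>i=0..K. (x gchoose i) * (y gchoose (K - i)))"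
    unfolding falling_gchoose gbinomial_Vandermonde ..
  also have "\<dots> = (\<Sum>i=0..K. real (K choose i) * falling x i * falling y (K - i))"
    unfolding sum_distrib_left
  proof (rule sum.cong[OF refl])
    fix i assume "i \<in> {0..K}"
    then have iK: "i \<le> K" by simp
    show "fact K * ((x gchoose i) * (y gchoose (K - i))) = real (K choose i) * falling x i * falling y (K - i)"
      unfolding falling_gchoose binomial_fact[OF iK] by (simp add: field_simps)
  qed
  finally show ?thesis .
qed

lemma T_add: "T n (\<lambda>\<mu>. f \<mu> + g \<mu>) = T n f + T n g"
  unfolding T_def by (simp add: sum.distrib)
lemma T_cmult: "T n (\<lambda>\<mu>. c * f \<mu>) = c * T n f"
  unfolding T_def by (simp add: sum_distrib_left)
lemma T_sum: "T n (\<lambda>\<mu>. \<Sum>x\<in>A. f x \<mu>) = (\<Sum>x\<in>A. T n (f x))"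
  unfolding T_def by (rule sum.swap)
lemma T_cong: assumes "\<And>\<mu>. f \<mu> = g \<mu>" shows "T n f = T n g"
proof -
  have "f = g" using assms by (rule ext)
  then show ?thesis by simp
qed

lemma add_mset_diff_in: "i \<in># N \<Longrightarrow> add_mset x N - {#i#} = add_mset x (N - {#i#})"
proof -
  assume "i \<in># N"
  then obtain M where N: "N = add_mset i M" by (blast dest: multi_member_split)
  show ?thesis unfolding N by simp
qed

lemma sum_mset_sum_suc:
  "j \<in># \<mu> \<Longrightarrow> sum_mset (add_mset (Suc j) (\<mu> - {#j#})) = Suc (sum_mset \<mu>)"
proof -
  assume "j \<in># \<mu>"
  then obtain M where N: "\<mu> = add_mset j M" by (blast dest: multi_member_split)
  show ?thesis unfolding N by simp
qed

lemma size_suc: "j \<in># \<mu> \<Longrightarrow> size (add_mset (Suc j) (\<mu> - {#j#})) = size \<mu>"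
proof -
  assume "j \<in># \<mu>"
  then obtain M where N: "\<mu> = add_mset j M" by (blast dest: multi_member_split)
  show ?thesis unfolding N by simp
qed

definition msum :: "nat multiset \<Rightarrow> real" where "msum \<mu> = real (sum_mset \<mu>)"

lemma msum_suc: "j \<in># \<mu> \<Longrightarrow> msum (add_mset (Suc j) (\<mu> - {#j#})) = msum \<mu> + 1"
  unfolding msum_def using sum_mset_sum_suc by simp
lemma msum_add: "msum (add_mset x \<mu>) = real x + msum \<mu>"
  unfolding msum_def by simp
lemma msum_empty: "msum {#} = 0" unfolding msum_def by simp
lemma msum_eq: "msum \<mu> = (\<Sum>j\<in>#\<mu>. real j)"
  unfolding msum_def by (simp add: of_nat_sum_mset)

lemma T_size: "T n (\<lambda>\<mu>. msum \<mu> * G \<mu>) = real n * T n G"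
proof (induction n arbitrary: G)
  case 0 then show ?case by (simp add: T_0 msum_empty)
next
  case (Suc n)
  have eq: "Op (\<lambda>\<mu>. msum \<mu> * G \<mu>) \<mu> = msum \<mu> * Op G \<mu> + Op G \<mu>" for \<mu>
  proof -
    have "(\<Sum>j\<in>#\<mu>. real j * (msum (add_mset (Suc j) (\<mu> - {#j#})) * G (add_mset (Suc j) (\<mu> - {#j#}))))
        = (\<Sum>j\<in>#\<mu>. (msum \<mu> + 1) * (real j * G (add_mset (Suc j) (\<mu> - {#j#}))))"
    proof (rule arg_cong[where f=sum_mset], rule image_mset_cong)
      fix j assume j: "j \<in># \<mu>"
      show "real j * (msum (add_mset (Suc j) (\<mu> - {#j#})) * G (add_mset (Suc j) (\<mu> - {#j#})))
        = (msum \<mu> + 1) * (real j * G (add_mset (Suc j) (\<mu> - {#j#})))"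
        by (subst msum_suc[OF j]) (simp add: algebra_simps)
    qed
    also have "\<dots> = (msum \<mu> + 1) * (\<Sum>j\<in>#\<mu>. real j * G (add_mset (Suc j) (\<mu> - {#j#})))"
      by (rule sum_mset_distrib_left[symmetric])
    finally have e2: "(\<Sum>j\<in>#\<mu>. real j * (msum (add_mset (Suc j) (\<mu> - {#j#})) * G (add_mset (Suc j) (\<mu> - {#j#}))))
        = (msum \<mu> + 1) * (\<Sum>j\<in>#\<mu>. real j * G (add_mset (Suc j) (\<mu> - {#j#})))" .
    have e3: "Op (\<lambda>\<mu>. msum \<mu> * G \<mu>) \<mu> = msum (add_mset 1 \<mu>) * G (add_mset 1 \<mu>) +
       (\<Sum>j\<in>#\<mu>. real j * (msum (add_mset (Suc j) (\<mu> - {#j#})) * G (add_mset (Suc j) (\<mu> - {#j#}))))"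
      by (simp only: Op_def)
    have e4: "Op G \<mu> = G (add_mset 1 \<mu>) + (\<Sum>j\<in>#\<mu>. real j * G (add_mset (Suc j) (\<mu> - {#j#})))"
      by (simp only: Op_def)
    show ?thesis by (simp only: e3 e2 e4) (simp add: msum_add algebra_simps)
  qed
  have "T (Suc n) (\<lambda>\<mu>. msum \<mu> * G \<mu>) = T n (\<lambda>\<mu>. msum \<mu> * Op G \<mu> + Op G \<mu>)"
    unfolding T_Suc by (rule T_cong) (rule eq)
  also have "\<dots> = real n * T n (Op G) + T n (Op G)" by (simp only: T_add Suc.IH)
  also have "\<dots> = real (Suc n) * T (Suc n) G" by (simp add: T_Suc algebra_simps)
  finally show ?case .
qed

lemma T_pochhammer: "T n (\<lambda>\<mu>. \<theta> ^ size \<mu>) = pochhammer \<theta> n"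
proof (induction n)
  case 0 then show ?case by (simp add: T_0)
next
  case (Suc n)
  have eq: "Op (\<lambda>\<mu>. \<theta> ^ size \<mu>) \<mu> = \<theta> * \<theta> ^ size \<mu> + msum \<mu> * \<theta> ^ size \<mu>" for \<mu>
  proof -
    have "(\<Sum>j\<in>#\<mu>. real j * \<theta> ^ size (add_mset (Suc j) (\<mu> - {#j#}))) = (\<Sum>j\<in>#\<mu>. real j * \<theta> ^ size \<mu>)"
    proof (rule arg_cong[where f=sum_mset], rule image_mset_cong)
      fix j assume j: "j \<in># \<mu>"
      show "real j * \<theta> ^ size (add_mset (Suc j) (\<mu> - {#j#})) = real j * \<theta> ^ size \<mu>"
        by (subst size_suc[OF j]) simp
    qed
    also have "\<dots> = msum \<mu> * \<theta> ^ size \<mu>"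
      unfolding msum_eq by (simp add: sum_mset_distrib_right)
    finally show ?thesis unfolding Op_def by simp
  qed
  have "T (Suc n) (\<lambda>\<mu>. \<theta> ^ size \<mu>) = T n (\<lambda>\<mu>. \<theta> * \<theta> ^ size \<mu> + msum \<mu> * \<theta> ^ size \<mu>)"
    unfolding T_Suc by (rule T_cong) (rule eq)
  also have "\<dots> = \<theta> * T n (\<lambda>\<mu>. \<theta> ^ size \<mu>) + real n * T n (\<lambda>\<mu>. \<theta> ^ size \<mu>)"
    by (simp only: T_add T_cmult T_size)
  finally show ?case using Suc.IH by (simp add: pochhammer_Suc algebra_simps)
qed

lemma H_add:
  "(\<Sum>j\<in># add_mset x \<nu>. \<Psi> j (add_mset x \<nu> - {#j#})) = \<Psi> x \<nu> + (\<Sum>j\<in>#\<nu>. \<Psi> j (add_mset x (\<nu> - {#j#})))"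
proof -
  have "(\<Sum>j\<in>#\<nu>. \<Psi> j (add_mset x \<nu> - {#j#})) = (\<Sum>j\<in>#\<nu>. \<Psi> j (add_mset x (\<nu> - {#j#})))"
    by (rule arg_cong[where f=sum_mset], rule image_mset_cong) (simp only: add_mset_diff_in)
  then show ?thesis by simp
qed

lemma mset_double_swap:
  "(\<Sum>i\<in>#M. \<Sum>j\<in>#M - {#i#}. F i j) = (\<Sum>j\<in>#M. \<Sum>i\<in>#M - {#j#}. F i j)"
proof (induction M)
  case empty then show ?case by simp
next
  case (add x N)
  have L: "(\<Sum>i\<in>#N. \<Sum>j\<in>#add_mset x N - {#i#}. F i j) = (\<Sum>i\<in>#N. F i x + (\<Sum>j\<in>#N - {#i#}. F i j))"
    by (rule arg_cong[where f=sum_mset], rule image_mset_cong) (simp add: add_mset_diff_in)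
  have R: "(\<Sum>j\<in>#N. \<Sum>i\<in>#add_mset x N - {#j#}. F i j) = (\<Sum>j\<in>#N. F x j + (\<Sum>i\<in>#N - {#j#}. F i j))"
    by (rule arg_cong[where f=sum_mset], rule image_mset_cong) (simp add: add_mset_diff_in)
  show ?case using L R add.IH by (simp add: sum_mset.distrib ac_simps)
qed

lemma Op_H:
  "Op (\<lambda>\<mu>. \<Sum>j\<in>#\<mu>. \<Psi> j (\<mu> - {#j#})) \<mu> =
     \<Psi> 1 \<mu> + (\<Sum>i\<in>#\<mu>. real i * \<Psi> (Suc i) (\<mu> - {#i#})) + (\<Sum>j\<in>#\<mu>. Op (\<Psi> j) (\<mu> - {#j#}))"
proof -
  let ?F = "\<lambda>i j. real i * \<Psi> j (add_mset (Suc i) (\<mu> - {#i#} - {#j#}))"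
  have e1: "Op (\<lambda>\<mu>. \<Sum>j\<in>#\<mu>. \<Psi> j (\<mu> - {#j#})) \<mu> =
     (\<Sum>j\<in># add_mset 1 \<mu>. \<Psi> j (add_mset 1 \<mu> - {#j#})) +
     (\<Sum>i\<in>#\<mu>. real i * (\<Sum>j\<in># add_mset (Suc i) (\<mu> - {#i#}). \<Psi> j (add_mset (Suc i) (\<mu> - {#i#}) - {#j#})))"
    by (simp only: Op_def)
  have e2: "(\<Sum>i\<in>#\<mu>. real i * (\<Sum>j\<in># add_mset (Suc i) (\<mu> - {#i#}). \<Psi> j (add_mset (Suc i) (\<mu> - {#i#}) - {#j#})))
     = (\<Sum>i\<in>#\<mu>. real i * \<Psi> (Suc i) (\<mu> - {#i#})) + (\<Sum>i\<in>#\<mu>. \<Sum>j\<in>#\<mu> - {#i#}. ?F i j)"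
  proof -
    have "(\<Sum>i\<in>#\<mu>. real i * (\<Sum>j\<in># add_mset (Suc i) (\<mu> - {#i#}). \<Psi> j (add_mset (Suc i) (\<mu> - {#i#}) - {#j#})))
      = (\<Sum>i\<in>#\<mu>. real i * \<Psi> (Suc i) (\<mu> - {#i#}) + (\<Sum>j\<in>#\<mu> - {#i#}. ?F i j))"
      by (rule arg_cong[where f=sum_mset], rule image_mset_cong)
         (simp only: H_add distrib_left sum_mset_distrib_left)
    then show ?thesis by (simp only: sum_mset.distrib)
  qed
  have e3: "(\<Sum>j\<in>#\<mu>. Op (\<Psi> j) (\<mu> - {#j#})) =
      (\<Sum>j\<in>#\<mu>. \<Psi> j (add_mset 1 (\<mu> - {#j#}))) + (\<Sum>j\<in>#\<mu>. \<Sum>i\<in>#\<mu> - {#j#}. ?F i j)"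
  proof -
    have "(\<Sum>j\<in>#\<mu>. Op (\<Psi> j) (\<mu> - {#j#})) =
      (\<Sum>j\<in>#\<mu>. \<Psi> j (add_mset 1 (\<mu> - {#j#})) + (\<Sum>i\<in>#\<mu> - {#j#}. ?F i j))"
      by (rule arg_cong[where f=sum_mset], rule image_mset_cong)
         (simp only: Op_def diff_right_commute)
    then show ?thesis by (simp only: sum_mset.distrib)
  qed
  have e4: "(\<Sum>j\<in># add_mset 1 \<mu>. \<Psi> j (add_mset 1 \<mu> - {#j#})) = \<Psi> 1 \<mu> + (\<Sum>j\<in>#\<mu>. \<Psi> j (add_mset 1 (\<mu> - {#j#})))"
    by (rule H_add)
  have e5: "(\<Sum>i\<in>#\<mu>. \<Sum>j\<in>#\<mu> - {#i#}. ?F i j) = (\<Sum>j\<in>#\<mu>. \<Sum>i\<in>#\<mu> - {#j#}. ?F i j)"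
    by (rule mset_double_swap)
  show ?thesis by (simp only: e1 e2 e3 e4 e5 add.assoc add.left_commute)
qed

definition cc :: "nat \<Rightarrow> nat \<Rightarrow> real" where
  "cc n j = fact n / (fact (n - j) * real j)"

lemma aux_frac:
  fixes F M j m :: real
  assumes "M > 0" "j > 0" "m \<ge> 0"
  shows "F / ((m + 1) * M) + F / (M * j) = (j + m + 1) * F / ((m + 1) * M * j)"
proof -
  have m1: "m + 1 \<noteq> 0" using assms by simp
  have Mj: "M \<noteq> 0" "j \<noteq> 0" using assms by auto
  have a: "F / ((m + 1) * M) = F * j / ((m + 1) * M * j)" using Mj m1 by simp
  have b: "F / (M * j) = F * (m + 1) / ((m + 1) * M * j)" using Mj m1 by simp
  show ?thesis unfolding a b add_divide_distrib[symmetric] by (simp add: algebra_simps)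
qed

lemma cc_rec:
  assumes "1 \<le> j" "j \<le> n"
  shows "fact n / fact (Suc n - j) + cc n j = cc (Suc n) j"
proof -
  obtain m where m: "n = j + m" using assms(2) le_Suc_ex by blast
  have j0: "real j > 0" using assms by simp
  have e: "Suc (j + m) - j = Suc m" "j + m - j = m" by auto
  have f1: "fact (Suc m) = (real m + 1) * fact m" by (simp add: fact_Suc algebra_simps)
  have f2: "fact (Suc (j + m)) = (real j + real m + 1) * fact (j + m)" by (simp add: fact_Suc algebra_simps)
  have M: "(fact m :: real) > 0" by simp
  have F: "(fact (j + m) :: real) > 0" by simp
  have m1: "real m + 1 > 0" by simp
  show ?thesis unfolding cc_def m e f1 f2
    by (rule aux_frac[OF M j0]) simp
qed

lemma cc_last: "fact n / fact (Suc n - Suc n) = cc (Suc n) (Suc n)"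
  unfolding cc_def by (simp add: fact_Suc field_simps)

lemma cc_j: "1 \<le> j \<Longrightarrow> cc n j * real j = fact n / fact (Suc n - Suc j)"
  unfolding cc_def by (simp add: field_simps)

lemma arith_MC:
  fixes A :: "nat \<Rightarrow> real"
  shows "A 1 + (\<Sum>j=1..n. cc n j * (real j * A (Suc j))) + (\<Sum>j=1..n. cc n j * A j)
       = (\<Sum>j=1..Suc n. cc (Suc n) j * A j)"
proof -
  have s1: "A 1 + (\<Sum>j=1..n. cc n j * (real j * A (Suc j))) = (\<Sum>j=1..Suc n. fact n / fact (Suc n - j) * A j)"
  proof -
    have "(\<Sum>j=1..n. cc n j * (real j * A (Suc j))) = (\<Sum>j=1..n. fact n / fact (Suc n - Suc j) * A (Suc j))"
    proof (rule sum.cong[OF refl])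
      fix j assume "j \<in> {1..n}"
      then have "cc n j * real j = fact n / fact (Suc n - Suc j)" by (intro cc_j) simp
      then show "cc n j * (real j * A (Suc j)) = fact n / fact (Suc n - Suc j) * A (Suc j)"
        by (simp only: mult.assoc[symmetric])
    qed
    also have "\<dots> = (\<Sum>j=Suc 1..Suc n. fact n / fact (Suc n - j) * A j)"
      by (rule sum.shift_bounds_cl_Suc_ivl[symmetric])
    finally have "A 1 + (\<Sum>j=1..n. cc n j * (real j * A (Suc j))) =
       fact n / fact (Suc n - 1) * A 1 + (\<Sum>j=Suc 1..Suc n. fact n / fact (Suc n - j) * A j)"
      by simp
    also have "\<dots> = (\<Sum>j=1..Suc n. fact n / fact (Suc n - j) * A j)"
      by (rule sum.atLeast_Suc_atMost[symmetric]) simp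
    finally show ?thesis .
  qed
  have s2: "(\<Sum>j=1..n. cc n j * A j) = (\<Sum>j=1..Suc n. (if j \<le> n then cc n j else 0) * A j)"
    by (simp add: sum.cl_ivl_Suc)
  have "(\<Sum>j=1..Suc n. fact n / fact (Suc n - j) * A j) + (\<Sum>j=1..Suc n. (if j \<le> n then cc n j else 0) * A j)
     = (\<Sum>j=1..Suc n. cc (Suc n) j * A j)"
    unfolding sum.distrib[symmetric]
  proof (rule sum.cong[OF refl])
    fix j assume j: "j \<in> {1..Suc n}"
    show "fact n / fact (Suc n - j) * A j + (if j \<le> n then cc n j else 0) * A j = cc (Suc n) j * A j"
    proof (cases "j \<le> n")
      case True
      have "fact n / fact (Suc n - j) * A j + (if j \<le> n then cc n j else 0) * A j
          = (fact n / fact (Suc n - j) + cc n j) * A j" using True by (simp add: distrib_right)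
      also have "\<dots> = cc (Suc n) j * A j" using cc_rec[of j n] j True by simp
      finally show ?thesis .
    next
      case False then have "j = Suc n" using j by simp
      then show ?thesis using cc_last[of n] by simp
    qed
  qed
  then show ?thesis using s1 s2 by simp
qed

lemma MC:
  "T n (\<lambda>\<mu>. \<Sum>j\<in>#\<mu>. \<Psi> j (\<mu> - {#j#})) = (\<Sum>j=1..n. cc n j * T (n - j) (\<Psi> j))"
proof (induction n arbitrary: \<Psi>)
  case 0 then show ?case by (simp add: T_0)
next
  case (Suc n)
  have "T (Suc n) (\<lambda>\<mu>. \<Sum>j\<in>#\<mu>. \<Psi> j (\<mu> - {#j#})) =
     T n (\<lambda>\<mu>. \<Psi> 1 \<mu> + (\<Sum>i\<in>#\<mu>. real i * \<Psi> (Suc i) (\<mu> - {#i#})) + (\<Sum>j\<in>#\<mu>. Op (\<Psi> j) (\<mu> - {#j#})))"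
    unfolding T_Suc by (rule T_cong) (rule Op_H)
  also have "\<dots> = T n (\<Psi> 1) + T n (\<lambda>\<mu>. \<Sum>i\<in>#\<mu>. (\<lambda>i \<nu>. real i * \<Psi> (Suc i) \<nu>) i (\<mu> - {#i#}))
      + T n (\<lambda>\<mu>. \<Sum>j\<in>#\<mu>. Op (\<Psi> j) (\<mu> - {#j#}))"
    by (simp only: T_add)
  also have "\<dots> = T n (\<Psi> 1) + (\<Sum>j=1..n. cc n j * T (n - j) (\<lambda>\<nu>. real j * \<Psi> (Suc j) \<nu>))
      + (\<Sum>j=1..n. cc n j * T (n - j) (Op (\<Psi> j)))"
  proof -
    have i1: "T n (\<lambda>\<mu>. \<Sum>i\<in>#\<mu>. (\<lambda>i \<nu>. real i * \<Psi> (Suc i) \<nu>) i (\<mu> - {#i#})) = (\<Sum>j=1..n. cc n j * T (n - j) (\<lambda>\<nu>. real j * \<Psi> (Suc j) \<nu>))"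
      by (rule Suc.IH[of "\<lambda>i \<nu>. real i * \<Psi> (Suc i) \<nu>"])
    have i2: "T n (\<lambda>\<mu>. \<Sum>j\<in>#\<mu>. Op (\<Psi> j) (\<mu> - {#j#})) = (\<Sum>j=1..n. cc n j * T (n - j) (Op (\<Psi> j)))"
      by (rule Suc.IH[of "\<lambda>j. Op (\<Psi> j)"])
    show ?thesis unfolding i1 i2 ..
  qed
  also have "\<dots> = T (Suc n - 1) (\<Psi> 1) + (\<Sum>j=1..n. cc n j * (real j * T (Suc n - Suc j) (\<Psi> (Suc j))))
      + (\<Sum>j=1..n. cc n j * T (Suc n - j) (\<Psi> j))"
  proof -
    have "(\<Sum>j=1..n. cc n j * T (n - j) (Op (\<Psi> j))) = (\<Sum>j=1..n. cc n j * T (Suc n - j) (\<Psi> j))"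
    proof (rule sum.cong[OF refl])
      fix j assume "j \<in> {1..n}"
      then have "Suc n - j = Suc (n - j)" by (simp add: Suc_diff_le)
      then show "cc n j * T (n - j) (Op (\<Psi> j)) = cc n j * T (Suc n - j) (\<Psi> j)" by (simp add: T_Suc)
    qed
    then show ?thesis by (simp add: T_cmult)
  qed
  also have "\<dots> = (\<Sum>j=1..Suc n. cc (Suc n) j * T (Suc n - j) (\<Psi> j))"
    using arith_MC[of "\<lambda>j. T (Suc n - j) (\<Psi> j)" n] by simp
  finally show ?case .
qed

definition hm :: "(nat \<Rightarrow> nat) \<Rightarrow> nat multiset \<Rightarrow> real" where
  "hm a \<mu> = (\<Sum>j\<in>#\<mu>. real (a j))"

definition FF :: "real \<Rightarrow> (nat \<Rightarrow> nat) \<Rightarrow> nat \<Rightarrow> nat multiset \<Rightarrow> real" where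
  "FF \<theta> a k \<mu> = \<theta> ^ size \<mu> * falling (hm a \<mu>) k"

lemma hm_remove: "j \<in># \<mu> \<Longrightarrow> hm a \<mu> = real (a j) + hm a (\<mu> - {#j#})"
proof -
  assume "j \<in># \<mu>"
  then obtain M where N: "\<mu> = add_mset j M" by (blast dest: multi_member_split)
  show ?thesis unfolding N hm_def by simp
qed

lemma size_remove: "j \<in># \<mu> \<Longrightarrow> size \<mu> = Suc (size (\<mu> - {#j#}))"
proof -
  assume "j \<in># \<mu>"
  then obtain M where N: "\<mu> = add_mset j M" by (blast dest: multi_member_split)
  show ?thesis unfolding N by simp
qed

lemma falling_0[simp]: "falling x 0 = 1" unfolding falling_def by simp

lemma falling_one_term:
  "real (a j) * falling (real (a j) - 1 + y) K =
     (\<Sum>r=1..Suc K. real (K choose (r - 1)) * falling (real (a j)) r * falling y (Suc K - r))"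
proof -
  have "real (a j) * falling (real (a j) - 1 + y) K =
     (\<Sum>i=0..K. real (K choose i) * falling (real (a j)) (Suc i) * falling y (K - i))"
    unfolding falling_vandermonde sum_distrib_left falling_Suc by (simp add: algebra_simps)
  also have "\<dots> = (\<Sum>r=Suc 0..Suc K. real (K choose (r - 1)) * falling (real (a j)) r * falling y (Suc K - r))"
    by (subst sum.shift_bounds_cl_Suc_ivl) simp
  finally show ?thesis by simp
qed

lemma falling_split:
  "falling (hm a \<mu>) (Suc K) =
     (\<Sum>j\<in>#\<mu>. \<Sum>r=1..Suc K. real (K choose (r - 1)) * falling (real (a j)) r * falling (hm a (\<mu> - {#j#})) (Suc K - r))"
proof -
  have "falling (hm a \<mu>) (Suc K) = (\<Sum>j\<in>#\<mu>. real (a j) * falling (hm a \<mu> - 1) K)"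
    unfolding falling_Suc hm_def by (simp add: sum_mset_distrib_right)
  also have "\<dots> = (\<Sum>j\<in>#\<mu>. \<Sum>r=1..Suc K. real (K choose (r - 1)) * falling (real (a j)) r * falling (hm a (\<mu> - {#j#})) (Suc K - r))"
  proof (rule arg_cong[where f=sum_mset], rule image_mset_cong)
    fix j assume j: "j \<in># \<mu>"
    have e: "hm a \<mu> - 1 = real (a j) - 1 + hm a (\<mu> - {#j#})" using hm_remove[OF j, of a] by simp
    show "real (a j) * falling (hm a \<mu> - 1) K = (\<Sum>r=1..Suc K. real (K choose (r - 1)) * falling (real (a j)) r * falling (hm a (\<mu> - {#j#})) (Suc K - r))"
      unfolding e by (rule falling_one_term)
  qed
  finally show ?thesis .
qed

lemma T_FF_0: "T n (FF \<theta> a 0) = pochhammer \<theta> n"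
  unfolding FF_def using T_pochhammer by simp

lemma T_FF_rec:
  "T n (FF \<theta> a (Suc K)) = (\<Sum>j=1..n. cc n j * (\<theta> * (\<Sum>r=1..Suc K. real (K choose (r - 1)) * falling (real (a j)) r * T (n - j) (FF \<theta> a (Suc K - r)))))"
proof -
  let ?\<Psi> = "\<lambda>j \<nu>. \<theta> * (\<Sum>r=1..Suc K. real (K choose (r - 1)) * falling (real (a j)) r * FF \<theta> a (Suc K - r) \<nu>)"
  have "FF \<theta> a (Suc K) \<mu> = (\<Sum>j\<in>#\<mu>. ?\<Psi> j (\<mu> - {#j#}))" for \<mu>
  proof -
    have "FF \<theta> a (Suc K) \<mu> = (\<Sum>j\<in>#\<mu>. \<theta> ^ size \<mu> * (\<Sum>r=1..Suc K. real (K choose (r - 1)) * falling (real (a j)) r * falling (hm a (\<mu> - {#j#})) (Suc K - r)))"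
      unfolding FF_def falling_split by (simp add: sum_mset_distrib_left)
    also have "\<dots> = (\<Sum>j\<in>#\<mu>. ?\<Psi> j (\<mu> - {#j#}))"
    proof (rule arg_cong[where f=sum_mset], rule image_mset_cong)
      fix j assume j: "j \<in># \<mu>"
      show "\<theta> ^ size \<mu> * (\<Sum>r=1..Suc K. real (K choose (r - 1)) * falling (real (a j)) r * falling (hm a (\<mu> - {#j#})) (Suc K - r)) = ?\<Psi> j (\<mu> - {#j#})"
        unfolding size_remove[OF j] FF_def by (simp add: sum_distrib_left algebra_simps)
    qed
    finally show ?thesis .
  qed
  then have "T n (FF \<theta> a (Suc K)) = T n (\<lambda>\<mu>. \<Sum>j\<in>#\<mu>. ?\<Psi> j (\<mu> - {#j#}))" by (rule T_cong)
  also have "\<dots> = (\<Sum>j=1..n. cc n j * T (n - j) (?\<Psi> j))" by (rule MC)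
  also have "\<dots> = (\<Sum>j=1..n. cc n j * (\<theta> * (\<Sum>r=1..Suc K. real (K choose (r - 1)) * falling (real (a j)) r * T (n - j) (FF \<theta> a (Suc K - r)))))"
    by (simp only: T_cmult T_sum)
  finally show ?thesis .
qed

lemma count_ctype: "finite S \<Longrightarrow> count (ctype S \<sigma>) j = card {C \<in> cyc S \<sigma>. card C = j}"
  unfolding ctype_def using finite_cyc[of S \<sigma>]
  by (simp add: count_image_mset' eq_commute)

lemma sum_count_hm:
  assumes "finite A" "set_mset \<mu> \<subseteq> A"
  shows "(\<Sum>j\<in>A. real (a j) * real (count \<mu> j)) = hm a \<mu>"
  using assms(2)
proof (induction \<mu>)
  case empty then show ?case by (simp add: hm_def)
next
  case (add x \<mu>)
  have xA: "x \<in> A" using add.prems by simp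
  have "(\<Sum>j\<in>A. real (a j) * real (count (add_mset x \<mu>) j)) =
     (\<Sum>j\<in>A. real (a j) * real (count \<mu> j)) + (\<Sum>j\<in>A. if j = x then real (a j) else 0)"
    unfolding sum.distrib[symmetric] by (rule sum.cong) (auto simp: algebra_simps)
  also have "(\<Sum>j\<in>A. if j = x then real (a j) else 0) = real (a x)"
    using xA assms(1) by (simp add: sum.delta)
  finally show ?case using add.IH add.prems by (simp add: hm_def)
qed

lemma ctype_range:
  assumes "\<sigma> permutes {1..n}"
  shows "set_mset (ctype {1..n} \<sigma>) \<subseteq> {1..n}"
proof
  fix j assume "j \<in># ctype {1..n} \<sigma>"
  then obtain x where x: "x \<in> {1..n}" "j = card (orbit \<sigma> x)"
    unfolding ctype_def cyc_def using finite_cyc by auto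
  have sub: "orbit \<sigma> x \<subseteq> {1..n}" by (rule permutes_orbit_subset[OF assms x(1)])
  have xo: "x \<in> orbit \<sigma> x" using perm_self_orbit[OF assms] by simp
  have fin: "finite (orbit \<sigma> x)" using sub finite_subset by blast
  have "card (orbit \<sigma> x) \<le> n" using card_mono[OF _ sub] by simp
  moreover have "card (orbit \<sigma> x) \<ge> 1" using fin xo card_0_eq by fastforce
  ultimately show "j \<in> {1..n}" using x by simp
qed

lemma ewens_T:
  "ewens_E \<theta> n (\<lambda>\<sigma>. falling (real (\<Sum>j=1..n. a j * cyc_count n \<sigma> j)) k) = T n (FF \<theta> a k) / pochhammer \<theta> n"
proof -
  have "(\<Sum>\<sigma>\<in>{\<sigma>. \<sigma> permutes {1..n}}. \<theta> ^ num_cycles n \<sigma> * falling (real (\<Sum>j=1..n. a j * cyc_count n \<sigma> j)) k)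
     = T n (FF \<theta> a k)"
    unfolding T_def
  proof (rule sum.cong[OF refl])
    fix \<sigma> assume "\<sigma> \<in> {\<sigma>. \<sigma> permutes {1..n}}"
    then have s: "\<sigma> permutes {1..n}" by simp
    have cy: "cycles_of n \<sigma> = cyc {1..n} \<sigma>" unfolding cycles_of_def cyc_def ..
    have nc: "num_cycles n \<sigma> = size (ctype {1..n} \<sigma>)"
      unfolding num_cycles_def cy ctype_def using finite_cyc[of "{1..n}" \<sigma>] by simp
    have cc: "cyc_count n \<sigma> j = count (ctype {1..n} \<sigma>) j" for j
      unfolding cyc_count_def cy using count_ctype[of "{1..n}" \<sigma> j] by simp
    have "real (\<Sum>j=1..n. a j * cyc_count n \<sigma> j) = (\<Sum>j=1..n. real (a j) * real (count (ctype {1..n} \<sigma>) j))"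
      unfolding cc by simp
    also have "\<dots> = hm a (ctype {1..n} \<sigma>)"
      by (rule sum_count_hm[OF _ ctype_range[OF s]]) simp
    finally show "\<theta> ^ num_cycles n \<sigma> * falling (real (\<Sum>j=1..n. a j * cyc_count n \<sigma> j)) k =
        FF \<theta> a k (ctype {1..n} \<sigma>)"
      unfolding FF_def nc by simp
  qed
  then show ?thesis unfolding ewens_E_def by simp
qed

definition Bc :: "nat \<Rightarrow> nat list \<Rightarrow> real" where
  "Bc k r = real (\<Prod>i<length r. (k - sum_list (take i r) - 1) choose (r ! i - 1))"

definition Pc :: "(nat \<Rightarrow> nat) \<Rightarrow> nat list \<Rightarrow> nat list \<Rightarrow> real" where
  "Pc a r js = (\<Prod>i<length r. falling (real (a (js ! i))) (r ! i) / real (js ! i))"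

definition tle :: "nat \<Rightarrow> nat \<Rightarrow> nat list set" where
  "tle n u = {js. length js = u \<and> (\<forall>x\<in>set js. 1 \<le> x) \<and> sum_list js \<le> n}"

definition pp :: "real \<Rightarrow> nat \<Rightarrow> real" where
  "pp \<theta> i = pochhammer \<theta> i / fact i"

definition XU :: "real \<Rightarrow> (nat \<Rightarrow> nat) \<Rightarrow> nat \<Rightarrow> nat \<Rightarrow> nat \<Rightarrow> real" where
  "XU \<theta> a n k U = (\<Sum>u<U. \<theta> ^ u * (\<Sum>r\<in>compositions k u. Bc k r *
       (\<Sum>js\<in>tle n u. Pc a r js * pp \<theta> (n - sum_list js))))"

lemma Bc_cons: "Bc k (r0 # rs) = real ((k - 1) choose (r0 - 1)) * Bc (k - r0) rs"
  unfolding Bc_def by (simp add: prod.lessThan_Suc_shift del: prod.lessThan_Suc)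

lemma Pc_cons: "Pc a (r0 # rs) (j # js) = falling (real (a j)) r0 / real j * Pc a rs js"
  unfolding Pc_def by (simp add: prod.lessThan_Suc_shift del: prod.lessThan_Suc)

lemma Bc_nil: "Bc k [] = 1" unfolding Bc_def by simp
lemma Pc_nil: "Pc a [] js = 1" unfolding Pc_def by simp

lemma length_le_sum: "\<forall>x\<in>set xs. 1 \<le> x \<Longrightarrow> length xs \<le> sum_list xs"
  by (induction xs) auto

lemma finite_comp: "finite (compositions k u)"
proof (rule finite_subset)
  show "compositions k u \<subseteq> {xs. set xs \<subseteq> {0..k} \<and> length xs = u}"
    unfolding compositions_def using member_le_sum_list by fastforce
  show "finite {xs. set xs \<subseteq> {0..k} \<and> length xs = u}" by (rule finite_lists_length_eq) simp
qed

lemma finite_tle: "finite (tle n u)"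
proof (rule finite_subset)
  show "tle n u \<subseteq> {xs. set xs \<subseteq> {0..n} \<and> length xs = u}"
    unfolding tle_def using member_le_sum_list by fastforce
  show "finite {xs. set xs \<subseteq> {0..n} \<and> length xs = u}" by (rule finite_lists_length_eq) simp
qed

lemma comp_big: "k < u \<Longrightarrow> compositions k u = {}"
  unfolding compositions_def using length_le_sum by fastforce

lemma comp_0_0: "compositions 0 0 = {[]}" unfolding compositions_def by auto
lemma tle_0: "tle n 0 = {[]}" unfolding tle_def by auto

lemma comp_Suc: "compositions k (Suc u) = (\<lambda>(r0, rs). r0 # rs) ` (SIGMA r0:{1..k}. compositions (k - r0) u)"
proof (rule set_eqI, rule iffI)
  fix r assume "r \<in> compositions k (Suc u)"
  then obtain r0 rs where r: "r = r0 # rs" "length rs = u" "1 \<le> r0" "\<forall>x\<in>set rs. 1 \<le> x" "r0 + sum_list rs = k"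
    unfolding compositions_def by (cases r) auto
  then have "(r0, rs) \<in> (SIGMA r0:{1..k}. compositions (k - r0) u)" unfolding compositions_def by auto
  then show "r \<in> (\<lambda>(r0, rs). r0 # rs) ` (SIGMA r0:{1..k}. compositions (k - r0) u)" using r by force
next
  fix r assume "r \<in> (\<lambda>(r0, rs). r0 # rs) ` (SIGMA r0:{1..k}. compositions (k - r0) u)"
  then show "r \<in> compositions k (Suc u)" unfolding compositions_def by auto
qed

lemma tle_Suc: "tle n (Suc u) = (\<lambda>(j, js). j # js) ` (SIGMA j:{1..n}. tle (n - j) u)"
proof (rule set_eqI, rule iffI)
  fix r assume "r \<in> tle n (Suc u)"
  then obtain r0 rs where r: "r = r0 # rs" "length rs = u" "1 \<le> r0" "\<forall>x\<in>set rs. 1 \<le> x" "r0 + sum_list rs \<le> n"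
    unfolding tle_def by (cases r) auto
  then have "(r0, rs) \<in> (SIGMA j:{1..n}. tle (n - j) u)" unfolding tle_def by auto
  then show "r \<in> (\<lambda>(j, js). j # js) ` (SIGMA j:{1..n}. tle (n - j) u)" using r by force
next
  fix r assume "r \<in> (\<lambda>(j, js). j # js) ` (SIGMA j:{1..n}. tle (n - j) u)"
  then show "r \<in> tle n (Suc u)" unfolding tle_def by auto
qed

lemma inj_cons: "inj_on (\<lambda>(x, xs). x # xs) A"
  by (auto simp: inj_on_def)

lemma sum_comp_Suc:
  "(\<Sum>r\<in>compositions k (Suc u). G r) = (\<Sum>r0=1..k. \<Sum>rs\<in>compositions (k - r0) u. G (r0 # rs))"
proof -
  have "(\<Sum>r\<in>compositions k (Suc u). G r) = (\<Sum>x\<in>(SIGMA r0:{1..k}. compositions (k - r0) u). G (fst x # snd x))"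
    unfolding comp_Suc by (subst sum.reindex[OF inj_cons]) (simp add: case_prod_beta)
  also have "\<dots> = (\<Sum>r0=1..k. \<Sum>rs\<in>compositions (k - r0) u. G (r0 # rs))"
    using sum.Sigma[of "{1..k}" "\<lambda>r0. compositions (k - r0) u" "\<lambda>r0 rs. G (r0 # rs)"]
    by (simp add: finite_comp case_prod_beta)
  finally show ?thesis .
qed

lemma sum_tle_Suc:
  "(\<Sum>js\<in>tle n (Suc u). G js) = (\<Sum>j=1..n. \<Sum>js\<in>tle (n - j) u. G (j # js))"
proof -
  have "(\<Sum>js\<in>tle n (Suc u). G js) = (\<Sum>x\<in>(SIGMA j:{1..n}. tle (n - j) u). G (fst x # snd x))"
    unfolding tle_Suc by (subst sum.reindex[OF inj_cons]) (simp add: case_prod_beta)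
  also have "\<dots> = (\<Sum>j=1..n. \<Sum>js\<in>tle (n - j) u. G (j # js))"
    using sum.Sigma[of "{1..n}" "\<lambda>j. tle (n - j) u" "\<lambda>j js. G (j # js)"]
    by (simp add: finite_tle case_prod_beta)
  finally show ?thesis .
qed

lemma XU_ext: "Suc k \<le> U \<Longrightarrow> XU \<theta> a n k U = XU \<theta> a n k (Suc k)"
proof (induction U rule: dec_induct)
  case base then show ?case ..
next
  case (step U)
  have "compositions k U = {}" using step(1) by (intro comp_big) simp
  then show ?case using step(3) unfolding XU_def by simp
qed

lemma comp_k_0: "0 < k \<Longrightarrow> compositions k 0 = {}"
  unfolding compositions_def by auto

definition qq :: "real \<Rightarrow> (nat \<Rightarrow> nat) \<Rightarrow> nat \<Rightarrow> nat \<Rightarrow> real" where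
  "qq \<theta> a n k = T n (FF \<theta> a k) / fact n"

lemma qq_rec:
  "qq \<theta> a n (Suc K) = (\<Sum>j=1..n. \<Sum>r=1..Suc K. \<theta> * real (K choose (r - 1)) * falling (real (a j)) r / real j * qq \<theta> a (n - j) (Suc K - r))"
proof -
  have "qq \<theta> a n (Suc K) = (\<Sum>j=1..n. cc n j * (\<theta> * (\<Sum>r=1..Suc K. real (K choose (r - 1)) * falling (real (a j)) r * T (n - j) (FF \<theta> a (Suc K - r))))) / fact n"
    unfolding qq_def T_FF_rec ..
  also have "\<dots> = (\<Sum>j=1..n. \<Sum>r=1..Suc K. \<theta> * real (K choose (r - 1)) * falling (real (a j)) r / real j * qq \<theta> a (n - j) (Suc K - r))"
    unfolding sum_divide_distrib
  proof (rule sum.cong[OF refl])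
    fix j assume "j \<in> {1..n}"
    have "cc n j * (\<theta> * (\<Sum>r=1..Suc K. real (K choose (r - 1)) * falling (real (a j)) r * T (n - j) (FF \<theta> a (Suc K - r)))) / fact n
       = (\<Sum>r=1..Suc K. cc n j / fact n * (\<theta> * (real (K choose (r - 1)) * falling (real (a j)) r * T (n - j) (FF \<theta> a (Suc K - r)))))"
      unfolding sum_distrib_left sum_divide_distrib by (rule sum.cong[OF refl]) (simp add: algebra_simps)
    also have "\<dots> = (\<Sum>r=1..Suc K. \<theta> * real (K choose (r - 1)) * falling (real (a j)) r / real j * qq \<theta> a (n - j) (Suc K - r))"
    proof (rule sum.cong[OF refl])
      fix r
      have f: "(fact n :: real) \<noteq> 0" "(fact (n - j) :: real) \<noteq> 0" by simp_all
      show "cc n j / fact n * (\<theta> * (real (K choose (r - 1)) * falling (real (a j)) r * T (n - j) (FF \<theta> a (Suc K - r))))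
          = \<theta> * real (K choose (r - 1)) * falling (real (a j)) r / real j * qq \<theta> a (n - j) (Suc K - r)"
        unfolding cc_def qq_def using f by (simp add: field_simps)
    qed
    finally show "cc n j * (\<theta> * (\<Sum>r=1..Suc K. real (K choose (r - 1)) * falling (real (a j)) r * T (n - j) (FF \<theta> a (Suc K - r)))) / fact n
       = (\<Sum>r=1..Suc K. \<theta> * real (K choose (r - 1)) * falling (real (a j)) r / real j * qq \<theta> a (n - j) (Suc K - r))" .
  qed
  finally show ?thesis .
qed

definition II :: "real \<Rightarrow> (nat \<Rightarrow> nat) \<Rightarrow> nat \<Rightarrow> nat \<Rightarrow> nat \<Rightarrow> real" where
  "II \<theta> a n k u = \<theta> ^ u * (\<Sum>rs\<in>compositions k u. Bc k rs *
       (\<Sum>js\<in>tle n u. Pc a rs js * pp \<theta> (n - sum_list js)))"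

lemma XU_II: "XU \<theta> a n k U = (\<Sum>u<U. II \<theta> a n k u)"
  unfolding XU_def II_def ..

lemma per_u:
  "II \<theta> a n S (Suc u) =
     (\<Sum>r0=1..S. \<Sum>j=1..n. \<theta> * real ((S - 1) choose (r0 - 1)) * falling (real (a j)) r0 / real j * II \<theta> a (n - j) (S - r0) u)"
proof -
  have "II \<theta> a n S (Suc u) = (\<Sum>r0=1..S. \<Sum>rs\<in>compositions (S - r0) u. \<Sum>j=1..n. \<Sum>js\<in>tle (n - j) u.
      \<theta> ^ Suc u * (real ((S - 1) choose (r0 - 1)) * Bc (S - r0) rs * (falling (real (a j)) r0 / real j * Pc a rs js * pp \<theta> (n - j - sum_list js))))"
    unfolding II_def sum_comp_Suc sum_tle_Suc Bc_cons Pc_cons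
    by (simp add: sum_distrib_left diff_diff_left)
  also have "\<dots> = (\<Sum>r0=1..S. \<Sum>j=1..n. \<Sum>rs\<in>compositions (S - r0) u. \<Sum>js\<in>tle (n - j) u.
      \<theta> ^ Suc u * (real ((S - 1) choose (r0 - 1)) * Bc (S - r0) rs * (falling (real (a j)) r0 / real j * Pc a rs js * pp \<theta> (n - j - sum_list js))))"
    by (rule sum.cong[OF refl]) (rule sum.swap)
  also have "\<dots> = (\<Sum>r0=1..S. \<Sum>j=1..n. \<theta> * real ((S - 1) choose (r0 - 1)) * falling (real (a j)) r0 / real j * II \<theta> a (n - j) (S - r0) u)"
    unfolding II_def by (simp add: sum_distrib_left algebra_simps)
  finally show ?thesis .
qed

lemma qq_XU: "qq \<theta> a n k = XU \<theta> a n k (Suc k)"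
proof (induction k arbitrary: n rule: less_induct)
  case (less k)
  show ?case
  proof (cases k)
    case 0
    show ?thesis unfolding 0 qq_def XU_def T_FF_0
      by (simp add: Bc_nil Pc_nil pp_def comp_0_0 tle_0)
  next
    case (Suc K)
    let ?S = "Suc K"
    have "qq \<theta> a n k = (\<Sum>j=1..n. \<Sum>r=1..?S. \<theta> * real (K choose (r - 1)) * falling (real (a j)) r / real j * qq \<theta> a (n - j) (?S - r))"
      unfolding Suc by (rule qq_rec)
    also have "\<dots> = (\<Sum>j=1..n. \<Sum>r=1..?S. \<theta> * real (K choose (r - 1)) * falling (real (a j)) r / real j * (\<Sum>u<?S. II \<theta> a (n - j) (?S - r) u))"
    proof (intro sum.cong refl)
      fix j r assume r: "r \<in> {1..?S}"
      have "qq \<theta> a (n - j) (?S - r) = XU \<theta> a (n - j) (?S - r) (Suc (?S - r))"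
        using less.IH[of "?S - r"] r Suc by simp
      also have "\<dots> = XU \<theta> a (n - j) (?S - r) ?S"
      proof -
        have "Suc (?S - r) \<le> ?S" using r by auto
        then show ?thesis using XU_ext[of "?S - r" ?S \<theta> a "n - j"] by simp
      qed
      finally show "\<theta> * real (K choose (r - 1)) * falling (real (a j)) r / real j * qq \<theta> a (n - j) (?S - r) =
          \<theta> * real (K choose (r - 1)) * falling (real (a j)) r / real j * (\<Sum>u<?S. II \<theta> a (n - j) (?S - r) u)"
        unfolding XU_II by simp
    qed
    also have "\<dots> = (\<Sum>j=1..n. \<Sum>r=1..?S. \<Sum>u<?S. \<theta> * real (K choose (r - 1)) * falling (real (a j)) r / real j * II \<theta> a (n - j) (?S - r) u)"
      by (simp only: sum_distrib_left)
    also have "\<dots> = (\<Sum>u<?S. \<Sum>r=1..?S. \<Sum>j=1..n. \<theta> * real (K choose (r - 1)) * falling (real (a j)) r / real j * II \<theta> a (n - j) (?S - r) u)"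
    proof -
      let ?f = "\<lambda>j r u. \<theta> * real (K choose (r - 1)) * falling (real (a j)) r / real j * II \<theta> a (n - j) (?S - r) u"
      have "(\<Sum>j=1..n. \<Sum>r=1..?S. \<Sum>u<?S. ?f j r u) = (\<Sum>j=1..n. \<Sum>u<?S. \<Sum>r=1..?S. ?f j r u)"
        by (rule sum.cong[OF refl], rule sum.swap)
      also have "\<dots> = (\<Sum>u<?S. \<Sum>j=1..n. \<Sum>r=1..?S. ?f j r u)" by (rule sum.swap)
      also have "\<dots> = (\<Sum>u<?S. \<Sum>r=1..?S. \<Sum>j=1..n. ?f j r u)"
        by (rule sum.cong[OF refl], rule sum.swap)
      finally show ?thesis .
    qed
    also have "\<dots> = (\<Sum>u<?S. II \<theta> a n ?S (Suc u))"
      unfolding per_u by simp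
    also have "\<dots> = XU \<theta> a n ?S (Suc ?S)"
    proof -
      have c0: "compositions ?S 0 = {}" by (rule comp_k_0) simp
      have "XU \<theta> a n ?S (Suc ?S) = (\<Sum>u<Suc ?S. II \<theta> a n ?S u)" by (rule XU_II)
      also have "\<dots> = II \<theta> a n ?S 0 + (\<Sum>u<?S. II \<theta> a n ?S (Suc u))" by (rule sum.lessThan_Suc_shift)
      also have "II \<theta> a n ?S 0 = 0" unfolding II_def c0 by simp
      finally show ?thesis by simp
    qed
    finally show ?thesis unfolding Suc .
  qed
qed

definition HH :: "nat \<Rightarrow> real" where "HH n = (\<Sum>j=1..n. 1 / real j)"

lemma ln_step: "1 \<le> n \<Longrightarrow> 1 / (real n + 1) \<le> ln (real n + 1) - ln (real n)"
proof -
  assume n: "1 \<le> n"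
  have pos: "real n / (real n + 1) > 0" using n by simp
  have "ln (real n / (real n + 1)) \<le> real n / (real n + 1) - 1" by (rule ln_le_minus_one[OF pos])
  moreover have "ln (real n / (real n + 1)) = ln (real n) - ln (real n + 1)" using n by (simp add: ln_div)
  moreover have "real n / (real n + 1) - 1 = - (1 / (real n + 1))" by (simp add: field_simps)
  ultimately show ?thesis by simp
qed

lemma HH_le: "HH n \<le> 1 + ln (real n)"
proof (induction n)
  case 0 then show ?case by (simp add: HH_def)
next
  case (Suc n)
  show ?case
  proof (cases "n = 0")
    case True then show ?thesis by (simp add: HH_def)
  next
    case False
    then have "1 / (real n + 1) \<le> ln (real n + 1) - ln (real n)" by (intro ln_step) simp
    moreover have "HH (Suc n) = HH n + 1 / (real n + 1)" unfolding HH_def by (simp add: add.commute)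
    ultimately show ?thesis using Suc.IH by (simp add: add.commute)
  qed
qed

lemma HH_nonneg: "0 \<le> HH n" unfolding HH_def by (rule sum_nonneg) simp

lemma HH_mono: "m \<le> n \<Longrightarrow> HH m \<le> HH n"
  unfolding HH_def by (rule sum_mono2) auto

lemma HS:
  assumes n: "1 \<le> n"
  shows "(\<Sum>J=1..n-1. 1 / (real J * real (n - J))) \<le> 2 * (1 + ln (real n)) / real n"
proof -
  have "(\<Sum>J=1..n-1. 1 / (real J * real (n - J))) = (\<Sum>J=1..n-1. (1 / real J + 1 / real (n - J)) / real n)"
  proof (rule sum.cong[OF refl])
    fix J assume "J \<in> {1..n-1}"
    then have J: "1 \<le> J" "J < n" by auto
    then have e: "real (n - J) = real n - real J" by simp
    have "real n - real J > 0" using J by simp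
    then show "1 / (real J * real (n - J)) = (1 / real J + 1 / real (n - J)) / real n"
      unfolding e using J by (simp add: field_simps)
  qed
  also have "\<dots> = (HH (n - 1) + (\<Sum>J=1..n-1. 1 / real (n - J))) / real n"
    unfolding HH_def sum_divide_distrib[symmetric] sum.distrib ..
  also have "(\<Sum>J=1..n-1. 1 / real (n - J)) = HH (n - 1)"
  proof -
    have "(\<Sum>J=1..n-1. 1 / real (n - J)) = (\<Sum>J=1..n-1. 1 / real (n - (n - 1 + 1 - J)))"
      by (rule sum.atLeastAtMost_rev)
    also have "\<dots> = HH (n - 1)" unfolding HH_def using n by (intro sum.cong refl) auto
    finally show ?thesis .
  qed
  also have "(HH (n - 1) + HH (n - 1)) / real n \<le> (2 * (1 + ln (real n))) / real n"
  proof (rule divide_right_mono)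
    have "HH (n - 1) \<le> HH n" by (rule HH_mono) simp
    then show "HH (n - 1) + HH (n - 1) \<le> 2 * (1 + ln (real n))" using HH_le[of n] by simp
  qed simp
  finally show ?thesis .
qed

definition teq :: "nat \<Rightarrow> nat \<Rightarrow> nat list set" where
  "teq J u = {js. length js = u \<and> (\<forall>x\<in>set js. 1 \<le> x) \<and> sum_list js = J}"

definition wt :: "nat list \<Rightarrow> real" where
  "wt js = (\<Prod>i<length js. 1 / real (js ! i))"

definition SS :: "nat \<Rightarrow> nat \<Rightarrow> real" where
  "SS u J = (\<Sum>js\<in>teq J u. wt js)"

lemma wt_cons: "wt (j # js) = 1 / real j * wt js"
  unfolding wt_def by (simp add: prod.lessThan_Suc_shift del: prod.lessThan_Suc)

lemma wt_nonneg: "0 \<le> wt js" unfolding wt_def by (rule prod_nonneg) simp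

lemma teq_sub: "teq J u \<subseteq> tle J u" unfolding teq_def tle_def by auto

lemma finite_teq: "finite (teq J u)" using finite_subset[OF teq_sub finite_tle] .

lemma teq_Suc: "teq J (Suc u) = (\<lambda>(j, js). j # js) ` (SIGMA j:{1..J}. teq (J - j) u)"
proof (rule set_eqI, rule iffI)
  fix r assume "r \<in> teq J (Suc u)"
  then obtain r0 rs where r: "r = r0 # rs" "length rs = u" "1 \<le> r0" "\<forall>x\<in>set rs. 1 \<le> x" "r0 + sum_list rs = J"
    unfolding teq_def by (cases r) auto
  then have "(r0, rs) \<in> (SIGMA j:{1..J}. teq (J - j) u)" unfolding teq_def by auto
  then show "r \<in> (\<lambda>(j, js). j # js) ` (SIGMA j:{1..J}. teq (J - j) u)" using r by force
next
  fix r assume "r \<in> (\<lambda>(j, js). j # js) ` (SIGMA j:{1..J}. teq (J - j) u)"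
  then show "r \<in> teq J (Suc u)" unfolding teq_def by auto
qed

lemma SS_Suc: "SS (Suc u) J = (\<Sum>j=1..J. 1 / real j * SS u (J - j))"
proof -
  have "SS (Suc u) J = (\<Sum>x\<in>(SIGMA j:{1..J}. teq (J - j) u). wt (fst x # snd x))"
    unfolding SS_def teq_Suc by (subst sum.reindex[OF inj_cons]) (simp add: case_prod_beta)
  also have "\<dots> = (\<Sum>j=1..J. \<Sum>js\<in>teq (J - j) u. wt (j # js))"
    using sum.Sigma[of "{1..J}" "\<lambda>j. teq (J - j) u" "\<lambda>j js. wt (j # js)"]
    by (simp add: finite_teq case_prod_beta)
  also have "\<dots> = (\<Sum>j=1..J. 1 / real j * SS u (J - j))"
    unfolding SS_def wt_cons sum_distrib_left ..
  finally show ?thesis .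
qed

lemma SS_0: "SS 0 J = (if J = 0 then 1 else 0)"
proof -
  have "teq J 0 = (if J = 0 then {[]} else {})" unfolding teq_def by (cases "J = 0") auto
  then show ?thesis unfolding SS_def by (simp add: wt_def)
qed

lemma SS_zero: "1 \<le> u \<Longrightarrow> SS u 0 = 0"
proof -
  assume u: "1 \<le> u"
  have "teq 0 u = {}"
  proof (rule equals0I)
    fix js assume "js \<in> teq 0 u"
    then have h: "length js = u" "\<forall>x\<in>set js. 1 \<le> x" "sum_list js = 0" unfolding teq_def by auto
    have "length js \<le> sum_list js" by (rule length_le_sum[OF h(2)])
    then show False using h(1) h(3) u by linarith
  qed
  then show ?thesis unfolding SS_def by simp
qed

lemma SS_nonneg: "0 \<le> SS u J" unfolding SS_def by (rule sum_nonneg) (rule wt_nonneg)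

lemma SS_bound:
  assumes "1 \<le> u" "1 \<le> J"
  shows "SS u J \<le> 2 ^ (u - 1) * (1 + ln (real J)) ^ (u - 1) / real J"
  using assms
proof (induction u arbitrary: J rule: dec_induct)
  case base
  have "SS 1 J = (\<Sum>j=1..J. if j = J then 1 / real j else 0)"
    unfolding One_nat_def SS_Suc SS_0 by (intro sum.cong refl) auto
  also have "\<dots> = 1 / real J" using base by simp
  finally show ?case by simp
next
  case (step u)
  let ?L = "1 + ln (real J)"
  have L1: "1 \<le> ?L" using step.prems by simp
  have "SS (Suc u) J = (\<Sum>j=1..J. 1 / real j * SS u (J - j))" by (rule SS_Suc)
  also have "\<dots> = (\<Sum>j=1..J-1. 1 / real j * SS u (J - j))"
  proof -
    have "{1..J} = insert J {1..J-1}" using step.prems by auto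
    moreover have "J \<notin> {1..J-1}" by auto
    ultimately show ?thesis using SS_zero[OF step.hyps(1)] by simp
  qed
  also have "\<dots> \<le> (\<Sum>j=1..J-1. 2 ^ (u - 1) * ?L ^ (u - 1) * (1 / (real j * real (J - j))))"
  proof (rule sum_mono)
    fix j assume j: "j \<in> {1..J-1}"
    then have jJ: "1 \<le> J - j" "J - j \<le> J" by auto
    have "SS u (J - j) \<le> 2 ^ (u - 1) * (1 + ln (real (J - j))) ^ (u - 1) / real (J - j)"
      by (rule step.IH[OF jJ(1)])
    also have "\<dots> \<le> 2 ^ (u - 1) * ?L ^ (u - 1) / real (J - j)"
    proof -
      have "0 \<le> 1 + ln (real (J - j))" using jJ by simp
      moreover have "1 + ln (real (J - j)) \<le> ?L" using jJ by simp
      ultimately have "(1 + ln (real (J - j))) ^ (u - 1) \<le> ?L ^ (u - 1)" by (intro power_mono)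
      then show ?thesis by (intro divide_right_mono mult_left_mono) auto
    qed
    finally have "SS u (J - j) \<le> 2 ^ (u - 1) * ?L ^ (u - 1) / real (J - j)" .
    then have "1 / real j * SS u (J - j) \<le> 1 / real j * (2 ^ (u - 1) * ?L ^ (u - 1) / real (J - j))"
      by (intro mult_left_mono) auto
    then show "1 / real j * SS u (J - j) \<le> 2 ^ (u - 1) * ?L ^ (u - 1) * (1 / (real j * real (J - j)))"
      by (simp add: field_simps)
  qed
  also have "\<dots> = 2 ^ (u - 1) * ?L ^ (u - 1) * (\<Sum>j=1..J-1. 1 / (real j * real (J - j)))"
    by (simp add: sum_distrib_left)
  also have "\<dots> \<le> 2 ^ (u - 1) * ?L ^ (u - 1) * (2 * ?L / real J)"
    by (intro mult_left_mono HS) (use step.prems in auto)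
  also have "\<dots> = 2 ^ (Suc u - 1) * ?L ^ (Suc u - 1) / real J"
    using step.hyps(1) by (cases u) (auto simp: field_simps)
  finally show ?case .
qed

lemma sum_tle_group:
  "(\<Sum>js\<in>tle n u. g (sum_list js) * wt js) = (\<Sum>J=0..n. g J * SS u J)"
proof -
  have "(\<Sum>js\<in>tle n u. g (sum_list js) * wt js) = (\<Sum>J=0..n. \<Sum>js\<in>{x. x \<in> tle n u \<and> sum_list x = J}. g (sum_list js) * wt js)"
  proof (rule sum.group[symmetric])
    show "finite (tle n u)" by (rule finite_tle)
    show "finite {0..n}" by simp
    show "sum_list ` tle n u \<subseteq> {0..n}" by (auto simp: tle_def)
  qed
  also have "\<dots> = (\<Sum>J=0..n. g J * SS u J)"
  proof (rule sum.cong[OF refl])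
    fix J assume "J \<in> {0..n}"
    then have "{x. x \<in> tle n u \<and> sum_list x = J} = teq J u" unfolding tle_def teq_def by auto
    then show "(\<Sum>js\<in>{x. x \<in> tle n u \<and> sum_list x = J}. g (sum_list js) * wt js) = g J * SS u J"
      unfolding SS_def sum_distrib_left by (intro sum.cong) (auto simp: teq_def)
  qed
  finally show ?thesis .
qed

lemma pp_pos: "\<theta> > 0 \<Longrightarrow> pp \<theta> i > 0"
  unfolding pp_def by (simp add: pochhammer_pos)

lemma pp_Suc: "pp \<theta> (Suc i) = pp \<theta> i * ((\<theta> + real i) / (real i + 1))"
  unfolding pp_def pochhammer_Suc by (simp add: field_simps)

lemma pp_1: "pp \<theta> 1 = \<theta>" unfolding pp_def by simp

lemma ln_quad:
  fixes t :: real assumes "t > -1"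
  shows "0 \<le> t - ln (1 + t) \<and> t - ln (1 + t) \<le> t\<^sup>2 / (1 + t)"
proof -
  have p: "1 + t > 0" using assms by simp
  have u: "ln (1 + t) \<le> t" using ln_le_minus_one[OF p] by simp
  have "ln (1 / (1 + t)) \<le> 1 / (1 + t) - 1" using ln_le_minus_one p by simp
  then have "- ln (1 + t) \<le> 1 / (1 + t) - 1" using p by (simp add: ln_div)
  then have l: "t - ln (1 + t) \<le> t + 1 / (1 + t) - 1" by simp
  have "t + 1 / (1 + t) - 1 = t\<^sup>2 / (1 + t)" using p by (simp add: field_simps power2_eq_square)
  then show ?thesis using u l by simp
qed

definition K0 :: "real \<Rightarrow> real" where "K0 \<theta> = 2 * \<bar>\<theta> - 1\<bar> + 2 * (\<theta> - 1)\<^sup>2"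

lemma K0_nonneg: "0 \<le> K0 \<theta>" unfolding K0_def by simp

definition dd :: "real \<Rightarrow> nat \<Rightarrow> real" where
  "dd \<theta> i = ln (pp \<theta> i) - (\<theta> - 1) * ln (real i)"

lemma dd_step:
  assumes th: "\<theta> > 0" and i: "1 \<le> i"
  shows "\<bar>dd \<theta> (Suc i) - dd \<theta> i\<bar> \<le> K0 \<theta> / (real i)\<^sup>2"
proof -
  define y where "y = (\<theta> - 1) / (real i + 1)"
  define z where "z = 1 / real i"
  have ip: "real i > 0" "real i + 1 > 0" using i by auto
  have y1: "1 + y = (\<theta> + real i) / (real i + 1)" unfolding y_def using ip by (simp add: field_simps)
  have z1: "1 + z = (real i + 1) / real i" unfolding z_def using ip by (simp add: field_simps)
  have yh: "1 + y \<ge> 1 / 2"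
  proof -
    have "(\<theta> + real i) / (real i + 1) \<ge> 1 / 2" using th i ip by (simp add: field_simps)
    then show ?thesis using y1 by simp
  qed
  have ppi: "pp \<theta> i > 0" using pp_pos[OF th] .
  have "dd \<theta> (Suc i) - dd \<theta> i = ln (1 + y) - (\<theta> - 1) * ln (1 + z)"
  proof -
    have a: "ln (pp \<theta> (Suc i)) = ln (pp \<theta> i) + ln (1 + y)"
      unfolding pp_Suc y1[symmetric] using ppi yh by (simp add: ln_mult)
    have b: "ln (real (Suc i)) = ln (real i) + ln (1 + z)"
    proof -
      have "real (Suc i) = real i * (1 + z)" unfolding z1 using ip by simp
      moreover have "1 + z > 0" unfolding z_def using ip(1) by (simp add: add_pos_pos)
      moreover have "ln (real i * (1 + z)) = ln (real i) + ln (1 + z)"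
        by (rule ln_mult_pos) (use ip \<open>1 + z > 0\<close> in auto)
      ultimately show ?thesis by simp
    qed
    show ?thesis unfolding dd_def a b by (simp add: algebra_simps)
  qed
  also have "\<dots> = (y - (\<theta> - 1) * z) - (y - ln (1 + y)) + (\<theta> - 1) * (z - ln (1 + z))"
    by (simp add: algebra_simps)
  finally have e: "dd \<theta> (Suc i) - dd \<theta> i = (y - (\<theta> - 1) * z) - (y - ln (1 + y)) + (\<theta> - 1) * (z - ln (1 + z))" .
  have t1: "\<bar>y - (\<theta> - 1) * z\<bar> \<le> \<bar>\<theta> - 1\<bar> / (real i)\<^sup>2"
  proof -
    have "y - (\<theta> - 1) * z = - (\<theta> - 1) / (real i * (real i + 1))"
      unfolding y_def z_def using ip by (simp add: field_simps)
    then have "\<bar>y - (\<theta> - 1) * z\<bar> = \<bar>\<theta> - 1\<bar> / (real i * (real i + 1))" using ip by (simp add: abs_div)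
    also have "\<dots> \<le> \<bar>\<theta> - 1\<bar> / (real i)\<^sup>2"
      by (rule divide_left_mono) (use ip in \<open>auto simp: power2_eq_square intro: mult_pos_pos\<close>)
    finally show ?thesis .
  qed
  have t2: "\<bar>y - ln (1 + y)\<bar> \<le> 2 * (\<theta> - 1)\<^sup>2 / (real i)\<^sup>2"
  proof -
    have q: "0 \<le> y - ln (1 + y) \<and> y - ln (1 + y) \<le> y\<^sup>2 / (1 + y)" by (rule ln_quad) (use yh in simp)
    have "y\<^sup>2 / (1 + y) \<le> 2 * y\<^sup>2"
    proof -
      have "y\<^sup>2 / (1 + y) \<le> y\<^sup>2 / (1 / 2)" by (rule divide_left_mono) (use yh in auto)
      then show ?thesis by simp
    qed
    also have "2 * y\<^sup>2 \<le> 2 * (\<theta> - 1)\<^sup>2 / (real i)\<^sup>2"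
    proof -
      have "y\<^sup>2 = (\<theta> - 1)\<^sup>2 / (real i + 1)\<^sup>2" unfolding y_def by (simp add: power_divide)
      also have "\<dots> \<le> (\<theta> - 1)\<^sup>2 / (real i)\<^sup>2"
        by (rule divide_left_mono) (use ip in \<open>auto intro: power_mono\<close>)
      finally show ?thesis by simp
    qed
    finally show ?thesis using q by simp
  qed
  have t3: "\<bar>(\<theta> - 1) * (z - ln (1 + z))\<bar> \<le> \<bar>\<theta> - 1\<bar> / (real i)\<^sup>2"
  proof -
    have zp: "z > 0" unfolding z_def using ip by simp
    have q: "0 \<le> z - ln (1 + z) \<and> z - ln (1 + z) \<le> z\<^sup>2 / (1 + z)" by (rule ln_quad) (use zp in simp)
    have "z\<^sup>2 / (1 + z) \<le> z\<^sup>2 / 1" by (rule divide_left_mono) (use zp in auto)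
    then have "z\<^sup>2 / (1 + z) \<le> z\<^sup>2" by simp
    then have "\<bar>z - ln (1 + z)\<bar> \<le> 1 / (real i)\<^sup>2" using q by (simp add: z_def power_divide)
    then have "\<bar>\<theta> - 1\<bar> * \<bar>z - ln (1 + z)\<bar> \<le> \<bar>\<theta> - 1\<bar> * (1 / (real i)\<^sup>2)" by (intro mult_left_mono) auto
    then show ?thesis by (simp add: abs_mult)
  qed
  have "\<bar>dd \<theta> (Suc i) - dd \<theta> i\<bar> \<le> \<bar>y - (\<theta> - 1) * z\<bar> + \<bar>y - ln (1 + y)\<bar> + \<bar>(\<theta> - 1) * (z - ln (1 + z))\<bar>"
    unfolding e by linarith
  also have "\<dots> \<le> \<bar>\<theta> - 1\<bar> / (real i)\<^sup>2 + 2 * (\<theta> - 1)\<^sup>2 / (real i)\<^sup>2 + \<bar>\<theta> - 1\<bar> / (real i)\<^sup>2"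
    using t1 t2 t3 by linarith
  also have "\<dots> = K0 \<theta> / (real i)\<^sup>2" unfolding K0_def by (simp add: add_divide_distrib)
  finally show ?thesis .
qed

lemma dd_diff:
  assumes th: "\<theta> > 0" and i: "1 \<le> i" and n: "i \<le> n"
  shows "\<bar>dd \<theta> n - dd \<theta> i\<bar> \<le> 2 * K0 \<theta> * (1 / real i - 1 / real n)"
  using n
proof (induction n rule: dec_induct)
  case base then show ?case by simp
next
  case (step n)
  have n1: "1 \<le> n" using step.hyps i by simp
  have np: "real n > 0" using n1 by simp
  have "\<bar>dd \<theta> (Suc n) - dd \<theta> i\<bar> \<le> \<bar>dd \<theta> (Suc n) - dd \<theta> n\<bar> + \<bar>dd \<theta> n - dd \<theta> i\<bar>" by linarith
  also have "\<dots> \<le> K0 \<theta> / (real n)\<^sup>2 + 2 * K0 \<theta> * (1 / real i - 1 / real n)"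
    using dd_step[OF th n1] step.IH by linarith
  also have "\<dots> \<le> 2 * K0 \<theta> * (1 / real i - 1 / real (Suc n))"
  proof -
    have a: "2 * (1 / real n - 1 / real (Suc n)) = 1 / (real n * (real n + 1) / 2)"
      using np by (simp add: field_simps)
    have "1 / (real n)\<^sup>2 \<le> 1 / (real n * (real n + 1) / 2)"
    proof (rule frac_le)
      show "0 < real n * (real n + 1) / 2" using np by simp
      show "real n * (real n + 1) / 2 \<le> (real n)\<^sup>2" using n1 np by (simp add: power2_eq_square field_simps)
    qed auto
    then have "1 / (real n)\<^sup>2 \<le> 2 * (1 / real n - 1 / real (Suc n))" using a by simp
    then have "K0 \<theta> * (1 / (real n)\<^sup>2) \<le> K0 \<theta> * (2 * (1 / real n - 1 / real (Suc n)))"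
      by (intro mult_left_mono K0_nonneg)
    then show ?thesis by (simp add: algebra_simps)
  qed
  finally show ?case .
qed

lemma dd_diff2:
  assumes th: "\<theta> > 0" and i: "1 \<le> i" and n: "i \<le> n"
  shows "\<bar>dd \<theta> i - dd \<theta> n\<bar> \<le> 2 * K0 \<theta> / real i"
proof -
  have "\<bar>dd \<theta> n - dd \<theta> i\<bar> \<le> 2 * K0 \<theta> * (1 / real i - 1 / real n)" by (rule dd_diff[OF assms])
  also have "\<dots> \<le> 2 * K0 \<theta> * (1 / real i)"
    by (intro mult_left_mono) (use K0_nonneg[of \<theta>] n i in auto)
  finally show ?thesis by (simp add: abs_minus_commute)
qed

lemma pp_repr:
  assumes th: "\<theta> > 0" and i: "1 \<le> i"
  shows "pp \<theta> i = exp (dd \<theta> i) * real i powr (\<theta> - 1)"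
proof -
  have "real i > 0" using i by simp
  then have "real i powr (\<theta> - 1) = exp ((\<theta> - 1) * ln (real i))" by (simp add: powr_def)
  then show ?thesis unfolding dd_def using pp_pos[OF th, of i] by (simp add: exp_diff)
qed

lemma exp_m1: fixes x :: real shows "\<bar>exp x - 1\<bar> \<le> \<bar>x\<bar> * exp \<bar>x\<bar>"
proof (cases "x \<ge> 0")
  case True
  have "1 - x \<le> exp (- x)" using exp_ge_add_one_self[of "-x"] by simp
  then have "(1 - x) * exp x \<le> exp (- x) * exp x" by (intro mult_right_mono) auto
  then have "exp x - x * exp x \<le> 1" by (simp add: algebra_simps exp_minus_inverse)
  moreover have "exp x \<ge> 1" using True by simp
  ultimately show ?thesis using True by simp
next
  case False
  have a: "1 - exp x \<le> - x" using exp_ge_add_one_self[of x] by linarith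
  have "(- x) * 1 \<le> (- x) * exp (- x)" by (intro mult_left_mono) (use False in auto)
  then have b: "- x \<le> (- x) * exp (- x)" by simp
  have c: "\<bar>exp x - 1\<bar> = 1 - exp x" using False by simp
  have d: "\<bar>x\<bar> = - x" using False by simp
  show ?thesis unfolding c d using a b by simp
qed

definition K1 :: "real \<Rightarrow> real" where "K1 \<theta> = 2 * K0 \<theta> * exp (2 * K0 \<theta>)"

lemma G1:
  assumes th: "\<theta> > 0" and i: "1 \<le> i" and n: "i \<le> n"
  shows "\<bar>pp \<theta> i / pp \<theta> n - (real i / real n) powr (\<theta> - 1)\<bar> \<le> K1 \<theta> * (real i / real n) powr (\<theta> - 1) / real i"
proof -
  define x where "x = dd \<theta> i - dd \<theta> n"
  have n1: "1 \<le> n" using i n by simp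
  have ip: "real i > 0" "real n > 0" using i n1 by auto
  have r: "pp \<theta> i / pp \<theta> n = exp x * (real i / real n) powr (\<theta> - 1)"
    unfolding pp_repr[OF th i] pp_repr[OF th n1] x_def powr_divide
    by (simp add: exp_diff)
  have xb: "\<bar>x\<bar> \<le> 2 * K0 \<theta> / real i" unfolding x_def by (rule dd_diff2[OF th i n])
  have xb2: "\<bar>x\<bar> \<le> 2 * K0 \<theta>"
  proof -
    have "2 * K0 \<theta> / real i \<le> 2 * K0 \<theta> / 1" by (rule divide_left_mono) (use K0_nonneg[of \<theta>] i in auto)
    then show ?thesis using xb by simp
  qed
  have "\<bar>exp x - 1\<bar> \<le> \<bar>x\<bar> * exp \<bar>x\<bar>" by (rule exp_m1)
  also have "\<dots> \<le> (2 * K0 \<theta> / real i) * exp (2 * K0 \<theta>)"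
    by (intro mult_mono xb) (use xb2 in auto)
  finally have e: "\<bar>exp x - 1\<bar> \<le> K1 \<theta> / real i" unfolding K1_def by simp
  have "\<bar>pp \<theta> i / pp \<theta> n - (real i / real n) powr (\<theta> - 1)\<bar> = \<bar>exp x - 1\<bar> * (real i / real n) powr (\<theta> - 1)"
  proof -
    have "exp x * (real i / real n) powr (\<theta> - 1) - (real i / real n) powr (\<theta> - 1) = (exp x - 1) * (real i / real n) powr (\<theta> - 1)"
      by (simp add: algebra_simps)
    then show ?thesis unfolding r by (simp add: abs_mult)
  qed
  also have "\<dots> \<le> K1 \<theta> / real i * (real i / real n) powr (\<theta> - 1)"
    by (intro mult_right_mono e) simp
  finally show ?thesis by simp
qed

lemma G2:
  assumes th: "\<theta> > 0" and n: "1 \<le> n"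
  shows "1 / pp \<theta> n \<le> exp (2 * K0 \<theta>) / \<theta> * real n powr (1 - \<theta>)"
proof -
  have np: "real n > 0" using n by simp
  have d1: "dd \<theta> 1 = ln \<theta>" unfolding dd_def pp_1 by simp
  have "\<bar>dd \<theta> 1 - dd \<theta> n\<bar> \<le> 2 * K0 \<theta> / real 1" by (rule dd_diff2[OF th _ n]) simp
  then have "- dd \<theta> n \<le> 2 * K0 \<theta> - ln \<theta>" using d1 by simp
  then have "exp (- dd \<theta> n) \<le> exp (2 * K0 \<theta> - ln \<theta>)" by simp
  also have "\<dots> = exp (2 * K0 \<theta>) / \<theta>" using th by (simp add: exp_diff)
  finally have e: "exp (- dd \<theta> n) \<le> exp (2 * K0 \<theta>) / \<theta>" .
  have "1 / pp \<theta> n = exp (- dd \<theta> n) * real n powr (1 - \<theta>)"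
  proof -
    have h: "real n powr (1 - \<theta>) = 1 / real n powr (\<theta> - 1)" using powr_minus_divide[of "real n" "\<theta> - 1"] by simp
    show ?thesis unfolding pp_repr[OF th n] h by (simp add: exp_minus field_simps)
  qed
  also have "\<dots> \<le> exp (2 * K0 \<theta>) / \<theta> * real n powr (1 - \<theta>)"
    by (intro mult_right_mono e) simp
  finally show ?thesis .
qed

definition Dn :: "real \<Rightarrow> nat \<Rightarrow> nat \<Rightarrow> real" where
  "Dn \<theta> n J = pp \<theta> (n - J) / pp \<theta> n - (if J < n then (1 - real J / real n) powr (\<theta> - 1) else 0)"

definition K3 :: "real \<Rightarrow> real" where "K3 \<theta> = K1 \<theta> + exp (2 * K0 \<theta>) / \<theta>"

lemma powr_bound:
  assumes n: "1 \<le> n" and i: "1 \<le> i" "i \<le> n"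
  shows "(real i / real n) powr (\<theta> - 1) \<le> real n powr (1 - min 1 \<theta>)"
proof (cases "\<theta> \<ge> 1")
  case True
  have x: "0 < real i / real n" "real i / real n \<le> 1" using n i by auto
  have "(real i / real n) powr (\<theta> - 1) \<le> 1" using powr_le1[of "\<theta> - 1" "real i / real n"] x True by simp
  also have "1 = real n powr (1 - min 1 \<theta>)" using True n by simp
  finally show ?thesis .
next
  case False
  have ip: "real i > 0" "real n > 0" using n i by auto
  have "(real i / real n) powr (\<theta> - 1) = (real n / real i) powr (1 - \<theta>)"
  proof -
    have "(real i / real n) powr (\<theta> - 1) = (real i / real n) powr (- (1 - \<theta>))" by simp
    also have "\<dots> = 1 / (real i / real n) powr (1 - \<theta>)" by (rule powr_minus_divide)
    also have "\<dots> = (real n / real i) powr (1 - \<theta>)" using ip by (simp add: powr_divide)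
    finally show ?thesis .
  qed
  also have "\<dots> \<le> real n powr (1 - \<theta>)"
  proof (rule powr_mono2)
    show "0 \<le> 1 - \<theta>" using False by simp
    show "0 \<le> real n / real i" using ip by simp
    show "real n / real i \<le> real n" using ip i by (simp add: divide_le_eq)
  qed
  also have "\<dots> = real n powr (1 - min 1 \<theta>)" using False by simp
  finally show ?thesis .
qed

lemma B_eq:
  assumes n: "1 \<le> n"
  shows "real n powr (1 - min 1 \<theta>) / real n = 1 / real n powr min 1 \<theta>"
proof -
  have np: "real n > 0" using n by simp
  have "real n powr (1 - min 1 \<theta>) = real n powr 1 / real n powr min 1 \<theta>" by (rule powr_diff)
  then show ?thesis using np by simp
qed

lemma G2B:
  assumes n: "1 \<le> n"
  shows "real n powr (1 - \<theta>) / real n \<le> 1 / real n powr min 1 \<theta>"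
proof -
  have np: "real n > 0" using n by simp
  have "real n powr (1 - \<theta>) / real n = 1 / real n powr \<theta>"
    using np by (simp add: powr_diff)
  also have "\<dots> = real n powr (- \<theta>)" by (rule powr_minus_divide[symmetric])
  also have "\<dots> \<le> real n powr (- min 1 \<theta>)" by (rule powr_mono) (use n in auto)
  also have "\<dots> = 1 / real n powr min 1 \<theta>" by (rule powr_minus_divide)
  finally show ?thesis .
qed

lemma KB:
  assumes th: "\<theta> > 0" and n: "1 \<le> n" and u: "1 \<le> u"
  shows "(\<Sum>js\<in>tle n u. \<bar>Dn \<theta> n (sum_list js)\<bar> * wt js) \<le> 2 ^ u * (1 + ln (real n)) ^ u * K3 \<theta> / real n powr min 1 \<theta>"
proof -
  let ?L = "1 + ln (real n)"
  let ?B = "1 / real n powr min 1 \<theta>"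
  have L1: "1 \<le> ?L" using n by simp
  have np: "real n > 0" using n by simp
  have Bnn: "0 \<le> ?B" by simp
  have K1nn: "0 \<le> K1 \<theta>" unfolding K1_def using K0_nonneg[of \<theta>] by simp
  have SSb: "SS u J \<le> 2 ^ (u - 1) * ?L ^ (u - 1) / real J" if J: "1 \<le> J" "J \<le> n" for J
  proof -
    have "SS u J \<le> 2 ^ (u - 1) * (1 + ln (real J)) ^ (u - 1) / real J" by (rule SS_bound[OF u J(1)])
    also have "\<dots> \<le> 2 ^ (u - 1) * ?L ^ (u - 1) / real J"
    proof -
      have "0 \<le> 1 + ln (real J)" "1 + ln (real J) \<le> ?L" using J by auto
      then have "(1 + ln (real J)) ^ (u - 1) \<le> ?L ^ (u - 1)" by (intro power_mono)
      then show ?thesis by (intro divide_right_mono mult_left_mono) auto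
    qed
    finally show ?thesis .
  qed
  have "(\<Sum>js\<in>tle n u. \<bar>Dn \<theta> n (sum_list js)\<bar> * wt js) = (\<Sum>J=0..n. \<bar>Dn \<theta> n J\<bar> * SS u J)"
    by (rule sum_tle_group)
  also have "\<dots> = (\<Sum>J=1..n-1. \<bar>Dn \<theta> n J\<bar> * SS u J) + \<bar>Dn \<theta> n n\<bar> * SS u n"
  proof -
    have "{0..n} = insert 0 (insert n {1..n-1})" using n by auto
    then show ?thesis using SS_zero[OF u] n by (simp add: add.commute)
  qed
  also have "\<dots> \<le> 2 ^ u * ?L ^ u * K1 \<theta> * ?B + 2 ^ u * ?L ^ u * (exp (2 * K0 \<theta>) / \<theta>) * ?B"
  proof (rule add_mono)
    have "(\<Sum>J=1..n-1. \<bar>Dn \<theta> n J\<bar> * SS u J) \<le>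
        (\<Sum>J=1..n-1. 2 ^ (u - 1) * ?L ^ (u - 1) * K1 \<theta> * real n powr (1 - min 1 \<theta>) * (1 / (real J * real (n - J))))"
    proof (rule sum_mono)
      fix J assume J: "J \<in> {1..n-1}"
      then have J1: "1 \<le> J" "J < n" by auto
      have i: "1 \<le> n - J" "n - J \<le> n" using J1 by auto
      have e1: "1 - real J / real n = real (n - J) / real n" using J1 np by (simp add: field_simps)
      have D: "\<bar>Dn \<theta> n J\<bar> \<le> K1 \<theta> * (real (n - J) / real n) powr (\<theta> - 1) / real (n - J)"
        unfolding Dn_def e1 using G1[OF th i] J1 by simp
      also have "\<dots> \<le> K1 \<theta> * real n powr (1 - min 1 \<theta>) / real (n - J)"
        by (intro divide_right_mono mult_left_mono powr_bound[OF n i] K1nn) simp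
      finally have D': "\<bar>Dn \<theta> n J\<bar> \<le> K1 \<theta> * real n powr (1 - min 1 \<theta>) / real (n - J)" .
      have S: "SS u J \<le> 2 ^ (u - 1) * ?L ^ (u - 1) / real J" using SSb J1 by simp
      have "\<bar>Dn \<theta> n J\<bar> * SS u J \<le> (K1 \<theta> * real n powr (1 - min 1 \<theta>) / real (n - J)) * (2 ^ (u - 1) * ?L ^ (u - 1) / real J)"
        by (intro mult_mono D' S SS_nonneg) (use K1nn in auto)
      then show "\<bar>Dn \<theta> n J\<bar> * SS u J \<le> 2 ^ (u - 1) * ?L ^ (u - 1) * K1 \<theta> * real n powr (1 - min 1 \<theta>) * (1 / (real J * real (n - J)))"
        by (simp add: field_simps)
    qed
    also have "\<dots> = 2 ^ (u - 1) * ?L ^ (u - 1) * K1 \<theta> * real n powr (1 - min 1 \<theta>) * (\<Sum>J=1..n-1. 1 / (real J * real (n - J)))"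
      by (simp add: sum_distrib_left)
    also have "\<dots> \<le> 2 ^ (u - 1) * ?L ^ (u - 1) * K1 \<theta> * real n powr (1 - min 1 \<theta>) * (2 * ?L / real n)"
      by (intro mult_left_mono HS[OF n]) (use K1nn L1 in auto)
    also have "\<dots> = 2 ^ u * ?L ^ u * K1 \<theta> * (real n powr (1 - min 1 \<theta>) / real n)"
      using u by (cases u) (auto simp: field_simps)
    also have "\<dots> = 2 ^ u * ?L ^ u * K1 \<theta> * ?B" unfolding B_eq[OF n] ..
    finally show "(\<Sum>J=1..n-1. \<bar>Dn \<theta> n J\<bar> * SS u J) \<le> 2 ^ u * ?L ^ u * K1 \<theta> * ?B" .
  next
    have p0: "pp \<theta> 0 = 1" by (simp add: pp_def)
    have "Dn \<theta> n n = 1 / pp \<theta> n" unfolding Dn_def using p0 by simp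
    then have Dn_n: "\<bar>Dn \<theta> n n\<bar> = 1 / pp \<theta> n" using pp_pos[OF th, of n] by simp
    have "\<bar>Dn \<theta> n n\<bar> * SS u n \<le> (exp (2 * K0 \<theta>) / \<theta> * real n powr (1 - \<theta>)) * (2 ^ (u - 1) * ?L ^ (u - 1) / real n)"
      unfolding Dn_n by (intro mult_mono G2[OF th n] SSb[OF n order.refl] SS_nonneg) (use th in auto)
    also have "\<dots> = 2 ^ (u - 1) * ?L ^ (u - 1) * (exp (2 * K0 \<theta>) / \<theta>) * (real n powr (1 - \<theta>) / real n)"
      by (simp add: field_simps)
    also have "\<dots> \<le> 2 ^ (u - 1) * ?L ^ (u - 1) * (exp (2 * K0 \<theta>) / \<theta>) * ?B"
      by (intro mult_left_mono G2B[OF n]) (use th L1 in auto)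
    also have "\<dots> \<le> 2 ^ u * ?L ^ u * (exp (2 * K0 \<theta>) / \<theta>) * ?B"
    proof -
      have "2 ^ (u - 1) * ?L ^ (u - 1) \<le> 2 ^ u * ?L ^ u"
      proof (intro mult_mono)
        show "(2::real) ^ (u - 1) \<le> 2 ^ u" by (rule power_increasing) auto
        show "?L ^ (u - 1) \<le> ?L ^ u" by (rule power_increasing) (use L1 in auto)
      qed (use L1 in auto)
      then show ?thesis by (intro mult_right_mono) (use th in auto)
    qed
    finally show "\<bar>Dn \<theta> n n\<bar> * SS u n \<le> 2 ^ u * ?L ^ u * (exp (2 * K0 \<theta>) / \<theta>) * ?B" .
  qed
  also have "\<dots> = 2 ^ u * ?L ^ u * K3 \<theta> / real n powr min 1 \<theta>"
  proof -
    have "real n powr min 1 \<theta> > 0" using np by simp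
    then show ?thesis unfolding K3_def using th by (simp add: field_simps)
  qed
  finally show ?thesis .
qed

lemma fall_bound:
  assumes "a \<le> m"
  shows "\<bar>falling (real a) r\<bar> \<le> real m ^ r"
proof (cases "r \<le> a")
  case True
  have "\<bar>falling (real a) r\<bar> = (\<Prod>i<r. \<bar>real a - real i\<bar>)" unfolding falling_def by (simp add: abs_prod)
  also have "\<dots> \<le> (\<Prod>i<r. real m)"
  proof (rule prod_mono)
    fix i assume "i \<in> {..<r}"
    then have "i < r" by simp
    then show "0 \<le> \<bar>real a - real i\<bar> \<and> \<bar>real a - real i\<bar> \<le> real m" using True assms by auto
  qed
  finally show ?thesis by simp
next
  case False
  then have "a \<in> {..<r}" by simp
  then have "falling (real a) r = 0" unfolding falling_def by (intro prod_zero) auto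
  then show ?thesis by simp
qed

lemma Pc_bound:
  assumes r: "r \<in> compositions k u" and js: "js \<in> tle n u" and a: "\<forall>j\<in>{1..n}. a j \<le> m"
  shows "\<bar>Pc a r js\<bar> \<le> real m ^ k * wt js"
proof -
  have lr: "length r = u" "sum_list r = k" using r unfolding compositions_def by auto
  have lj: "length js = u" "\<forall>x\<in>set js. 1 \<le> x" "sum_list js \<le> n" using js unfolding tle_def by auto
  have jin: "js ! i \<in> {1..n}" if "i < u" for i
  proof -
    have mem: "js ! i \<in> set js" using that lj(1) by simp
    then have "1 \<le> js ! i" using lj(2) by simp
    moreover have "js ! i \<le> sum_list js" using mem member_le_sum_list by blast
    ultimately show ?thesis using lj(3) by simp
  qed
  have "\<bar>Pc a r js\<bar> = (\<Prod>i<u. \<bar>falling (real (a (js ! i))) (r ! i)\<bar> * (1 / real (js ! i)))"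
    unfolding Pc_def lr(1) by (simp add: abs_prod abs_divide)
  also have "\<dots> \<le> (\<Prod>i<u. real m ^ (r ! i) * (1 / real (js ! i)))"
  proof (rule prod_mono)
    fix i assume "i \<in> {..<u}"
    then have "js ! i \<in> {1..n}" using jin by simp
    then have "\<bar>falling (real (a (js ! i))) (r ! i)\<bar> \<le> real m ^ (r ! i)" using a fall_bound by blast
    then show "0 \<le> \<bar>falling (real (a (js ! i))) (r ! i)\<bar> * (1 / real (js ! i)) \<and>
      \<bar>falling (real (a (js ! i))) (r ! i)\<bar> * (1 / real (js ! i)) \<le> real m ^ (r ! i) * (1 / real (js ! i))"
      by (auto intro: divide_right_mono)
  qed
  also have "\<dots> = (\<Prod>i<u. real m ^ (r ! i)) * wt js"
    unfolding wt_def lj(1) prod.distrib ..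
  also have "(\<Prod>i<u. real m ^ (r ! i)) = real m ^ k"
  proof -
    have "sum_list r = (\<Sum>i<u. r ! i)" using lr(1) by (simp add: sum_list_sum_nth atLeast0LessThan)
    then show ?thesis using lr(2) by (simp add: power_sum)
  qed
  finally show ?thesis .
qed

lemma E_formula:
  assumes th: "\<theta> > 0" and k: "1 \<le> k"
  shows "ewens_E \<theta> n (\<lambda>\<sigma>. falling (real (\<Sum>j=1..n. a j * cyc_count n \<sigma> j)) k) =
    (\<Sum>u=1..k. \<theta> ^ u * (\<Sum>r\<in>compositions k u. Bc k r * (\<Sum>js\<in>tle n u. Pc a r js * (pp \<theta> (n - sum_list js) / pp \<theta> n))))"
proof -
  have pn: "pochhammer \<theta> n = fact n * pp \<theta> n" unfolding pp_def by simp
  have ppn: "pp \<theta> n > 0" by (rule pp_pos[OF th])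
  have "ewens_E \<theta> n (\<lambda>\<sigma>. falling (real (\<Sum>j=1..n. a j * cyc_count n \<sigma> j)) k) = T n (FF \<theta> a k) / pochhammer \<theta> n"
    by (rule ewens_T)
  also have "T n (FF \<theta> a k) = fact n * XU \<theta> a n k (Suc k)"
  proof -
    have f: "(fact n :: real) > 0" by simp
    have "T n (FF \<theta> a k) / fact n = XU \<theta> a n k (Suc k)" using qq_XU[of \<theta> a n k] unfolding qq_def .
    then show ?thesis using f by (simp add: divide_eq_eq mult.commute)
  qed
  finally have "ewens_E \<theta> n (\<lambda>\<sigma>. falling (real (\<Sum>j=1..n. a j * cyc_count n \<sigma> j)) k) = XU \<theta> a n k (Suc k) / pp \<theta> n"
    unfolding pn by simp
  also have "XU \<theta> a n k (Suc k) = (\<Sum>u=1..k. \<theta> ^ u * (\<Sum>r\<in>compositions k u. Bc k r * (\<Sum>js\<in>tle n u. Pc a r js * pp \<theta> (n - sum_list js))))"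
  proof -
    have c0: "compositions k 0 = {}" using k by (intro comp_k_0) simp
    have "{..<Suc k} = insert 0 {1..k}" by auto
    then show ?thesis unfolding XU_def using c0 by simp
  qed
  finally show ?thesis
    by (simp add: sum_divide_distrib sum_distrib_left)
qed

lemma main_formula:
  "main_term \<theta> k a n =
    (\<Sum>u=1..k. \<theta> ^ u * (\<Sum>r\<in>compositions k u. Bc k r * (\<Sum>js\<in>tle n u. Pc a r js *
       (if sum_list js < n then (1 - real (sum_list js) / real n) powr (\<theta> - 1) else 0))))"
  unfolding main_term_def
proof (rule sum.cong[OF refl])
  fix u assume "u \<in> {1..k}"
  have it: "index_tuples n u = {js \<in> tle n u. sum_list js < n}"
    unfolding index_tuples_def tle_def by auto
  have "(\<Sum>r\<in>compositions k u.
         real (\<Prod>i<u. (k - sum_list (take i r) - 1) choose (r ! i - 1)) *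
         (\<Sum>js\<in>index_tuples n u.
            (\<Prod>i<u. falling (real (a (js ! i))) (r ! i) / real (js ! i)) *
            (1 - real (sum_list js) / real n) powr (\<theta> - 1))) =
        (\<Sum>r\<in>compositions k u. Bc k r * (\<Sum>js\<in>tle n u. Pc a r js *
       (if sum_list js < n then (1 - real (sum_list js) / real n) powr (\<theta> - 1) else 0)))"
  proof (rule sum.cong[OF refl])
    fix r assume r: "r \<in> compositions k u"
    then have lr: "length r = u" unfolding compositions_def by simp
    have b: "real (\<Prod>i<u. (k - sum_list (take i r) - 1) choose (r ! i - 1)) = Bc k r"
      unfolding Bc_def lr ..
    have c: "(\<Sum>js\<in>index_tuples n u. (\<Prod>i<u. falling (real (a (js ! i))) (r ! i) / real (js ! i)) *
          (1 - real (sum_list js) / real n) powr (\<theta> - 1)) =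
        (\<Sum>js\<in>tle n u. Pc a r js * (if sum_list js < n then (1 - real (sum_list js) / real n) powr (\<theta> - 1) else 0))"
      unfolding it sum.inter_filter[OF finite_tle] Pc_def lr by (intro sum.cong refl) simp
    show "real (\<Prod>i<u. (k - sum_list (take i r) - 1) choose (r ! i - 1)) *
         (\<Sum>js\<in>index_tuples n u.
            (\<Prod>i<u. falling (real (a (js ! i))) (r ! i) / real (js ! i)) *
            (1 - real (sum_list js) / real n) powr (\<theta> - 1)) =
        Bc k r * (\<Sum>js\<in>tle n u. Pc a r js *
       (if sum_list js < n then (1 - real (sum_list js) / real n) powr (\<theta> - 1) else 0))"
      unfolding b c ..
  qed
  then show "\<theta> ^ u * (\<Sum>r\<in>compositions k u.
         real (\<Prod>i<u. (k - sum_list (take i r) - 1) choose (r ! i - 1)) *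
         (\<Sum>js\<in>index_tuples n u.
            (\<Prod>i<u. falling (real (a (js ! i))) (r ! i) / real (js ! i)) *
            (1 - real (sum_list js) / real n) powr (\<theta> - 1))) =
    \<theta> ^ u * (\<Sum>r\<in>compositions k u. Bc k r * (\<Sum>js\<in>tle n u. Pc a r js *
       (if sum_list js < n then (1 - real (sum_list js) / real n) powr (\<theta> - 1) else 0)))"
    by simp
qed

lemma Lpow:
  assumes n: "1 \<le> n" and u: "u \<le> k"
  shows "(1 + ln (real n)) ^ u \<le> 2 ^ k * (1 + ln (real n) ^ k)"
proof -
  let ?x = "ln (real n)"
  have x0: "0 \<le> ?x" using n by simp
  have "(1 + ?x) ^ u \<le> (1 + ?x) ^ k" by (rule power_increasing[OF u]) (use x0 in simp)
  also have "\<dots> \<le> 2 ^ k * (1 + ?x ^ k)"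
  proof (cases "?x \<le> 1")
    case True
    have "(1 + ?x) ^ k \<le> 2 ^ k" by (rule power_mono) (use True x0 in auto)
    also have "\<dots> \<le> 2 ^ k * (1 + ?x ^ k)" using x0 by simp
    finally show ?thesis .
  next
    case False
    have "(1 + ?x) ^ k \<le> (2 * ?x) ^ k" by (rule power_mono) (use False in auto)
    also have "\<dots> = 2 ^ k * ?x ^ k" by (simp add: power_mult_distrib)
    also have "\<dots> \<le> 2 ^ k * (1 + ?x ^ k)" by simp
    finally show ?thesis .
  qed
  finally show ?thesis .
qed

lemma Bc_nonneg: "0 \<le> Bc k r" unfolding Bc_def by (simp only: of_nat_0_le_iff)

lemma K3_nonneg: "\<theta> > 0 \<Longrightarrow> 0 \<le> K3 \<theta>"
  unfolding K3_def K1_def using K0_nonneg[of \<theta>] by simp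

theorem lemma3:
  fixes \<theta> :: real and m k :: nat
  assumes "\<theta> > 0" and "k \<ge> 1"
  shows "\<exists>C. \<forall>n\<ge>1. \<forall>a :: nat \<Rightarrow> nat. (\<forall>j\<in>{1..n}. a j \<le> m) \<longrightarrow>
           \<bar>ewens_E \<theta> n (\<lambda>\<sigma>. falling (real (\<Sum>j=1..n. a j * cyc_count n \<sigma> j)) k)
              - main_term \<theta> k a n\<bar>
           \<le> C * (1 + ln (real n) ^ k) / real n powr min 1 \<theta>"
proof -
  have th: "\<theta> > 0" and k: "1 \<le> k" using assms by auto
  define C where "C = (\<Sum>u=1..k. \<theta> ^ u * (\<Sum>r\<in>compositions k u. Bc k r) * real m ^ k * 2 ^ u * K3 \<theta> * 2 ^ k)"
  show ?thesis
  proof (intro exI[of _ C] allI impI)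
    fix n :: nat and a :: "nat \<Rightarrow> nat"
    assume n: "1 \<le> n" and a: "\<forall>j\<in>{1..n}. a j \<le> m"
    let ?L = "1 + ln (real n)"
    let ?B = "1 / real n powr min 1 \<theta>"
    have Bnn: "0 \<le> ?B" by simp
    have K3nn: "0 \<le> K3 \<theta>" by (rule K3_nonneg[OF th])
    let ?E = "ewens_E \<theta> n (\<lambda>\<sigma>. falling (real (\<Sum>j=1..n. a j * cyc_count n \<sigma> j)) k)"
    have diff: "?E - main_term \<theta> k a n =
      (\<Sum>u=1..k. \<theta> ^ u * (\<Sum>r\<in>compositions k u. Bc k r * (\<Sum>js\<in>tle n u. Pc a r js * Dn \<theta> n (sum_list js))))"
      unfolding E_formula[OF th k] main_formula Dn_def
      by (simp only: sum_subtractf[symmetric] right_diff_distrib[symmetric])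
    have "\<bar>?E - main_term \<theta> k a n\<bar> \<le>
        (\<Sum>u=1..k. \<bar>\<theta> ^ u * (\<Sum>r\<in>compositions k u. Bc k r * (\<Sum>js\<in>tle n u. Pc a r js * Dn \<theta> n (sum_list js)))\<bar>)"
      unfolding diff by (rule sum_abs)
    also have "\<dots> \<le> (\<Sum>u=1..k. \<theta> ^ u * (\<Sum>r\<in>compositions k u. Bc k r) * real m ^ k * 2 ^ u * K3 \<theta> * 2 ^ k * (1 + ln (real n) ^ k) * ?B)"
    proof (rule sum_mono)
      fix u assume u: "u \<in> {1..k}"
      then have u1: "1 \<le> u" and uk: "u \<le> k" by auto
      have inner: "\<bar>\<Sum>js\<in>tle n u. Pc a r js * Dn \<theta> n (sum_list js)\<bar> \<le> real m ^ k * (2 ^ u * ?L ^ u * K3 \<theta> * ?B)"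
        if r: "r \<in> compositions k u" for r
      proof -
        have "\<bar>\<Sum>js\<in>tle n u. Pc a r js * Dn \<theta> n (sum_list js)\<bar> \<le> (\<Sum>js\<in>tle n u. \<bar>Pc a r js * Dn \<theta> n (sum_list js)\<bar>)"
          by (rule sum_abs)
        also have "\<dots> \<le> (\<Sum>js\<in>tle n u. real m ^ k * (\<bar>Dn \<theta> n (sum_list js)\<bar> * wt js))"
        proof (rule sum_mono)
          fix js assume js: "js \<in> tle n u"
          have "\<bar>Pc a r js\<bar> * \<bar>Dn \<theta> n (sum_list js)\<bar> \<le> (real m ^ k * wt js) * \<bar>Dn \<theta> n (sum_list js)\<bar>"
            by (intro mult_right_mono Pc_bound[OF r js a]) simp
          then show "\<bar>Pc a r js * Dn \<theta> n (sum_list js)\<bar> \<le> real m ^ k * (\<bar>Dn \<theta> n (sum_list js)\<bar> * wt js)"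
            by (simp add: abs_mult algebra_simps)
        qed
        also have "\<dots> = real m ^ k * (\<Sum>js\<in>tle n u. \<bar>Dn \<theta> n (sum_list js)\<bar> * wt js)"
          by (simp add: sum_distrib_left)
        also have "\<dots> \<le> real m ^ k * (2 ^ u * ?L ^ u * K3 \<theta> / real n powr min 1 \<theta>)"
          by (intro mult_left_mono KB[OF th n u1]) simp
        finally show ?thesis by simp
      qed
      have "\<bar>\<Sum>r\<in>compositions k u. Bc k r * (\<Sum>js\<in>tle n u. Pc a r js * Dn \<theta> n (sum_list js))\<bar>
          \<le> (\<Sum>r\<in>compositions k u. \<bar>Bc k r * (\<Sum>js\<in>tle n u. Pc a r js * Dn \<theta> n (sum_list js))\<bar>)"
        by (rule sum_abs)
      also have "\<dots> \<le> (\<Sum>r\<in>compositions k u. Bc k r * (real m ^ k * (2 ^ u * ?L ^ u * K3 \<theta> * ?B)))"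
      proof (rule sum_mono)
        fix r assume r: "r \<in> compositions k u"
        show "\<bar>Bc k r * (\<Sum>js\<in>tle n u. Pc a r js * Dn \<theta> n (sum_list js))\<bar> \<le> Bc k r * (real m ^ k * (2 ^ u * ?L ^ u * K3 \<theta> * ?B))"
        proof -
          have bb: "\<bar>Bc k r\<bar> = Bc k r" using Bc_nonneg[of k r] by simp
          show ?thesis unfolding abs_mult bb by (intro mult_left_mono inner[OF r] Bc_nonneg)
        qed
      qed
      also have "\<dots> = (\<Sum>r\<in>compositions k u. Bc k r) * (real m ^ k * (2 ^ u * ?L ^ u * K3 \<theta> * ?B))"
        by (rule sum_distrib_right[symmetric])
      also have "\<dots> = (\<Sum>r\<in>compositions k u. Bc k r) * real m ^ k * 2 ^ u * K3 \<theta> * ?L ^ u * ?B"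
        by (simp only: mult_ac)
      also have "\<dots> \<le> (\<Sum>r\<in>compositions k u. Bc k r) * real m ^ k * 2 ^ u * K3 \<theta> * (2 ^ k * (1 + ln (real n) ^ k)) * ?B"
      proof -
        have s0: "0 \<le> (\<Sum>r\<in>compositions k u. Bc k r)" by (rule sum_nonneg) (rule Bc_nonneg)
        show ?thesis
          by (intro mult_right_mono mult_left_mono Lpow[OF n uk]) (use s0 K3nn in auto)
      qed
      finally have X: "\<bar>\<Sum>r\<in>compositions k u. Bc k r * (\<Sum>js\<in>tle n u. Pc a r js * Dn \<theta> n (sum_list js))\<bar>
          \<le> (\<Sum>r\<in>compositions k u. Bc k r) * real m ^ k * 2 ^ u * K3 \<theta> * (2 ^ k * (1 + ln (real n) ^ k)) * ?B" .
      have "\<bar>\<theta> ^ u * (\<Sum>r\<in>compositions k u. Bc k r * (\<Sum>js\<in>tle n u. Pc a r js * Dn \<theta> n (sum_list js)))\<bar>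
          = \<theta> ^ u * \<bar>\<Sum>r\<in>compositions k u. Bc k r * (\<Sum>js\<in>tle n u. Pc a r js * Dn \<theta> n (sum_list js))\<bar>"
        using th by (simp add: abs_mult)
      also have "\<dots> \<le> \<theta> ^ u * ((\<Sum>r\<in>compositions k u. Bc k r) * real m ^ k * 2 ^ u * K3 \<theta> * (2 ^ k * (1 + ln (real n) ^ k)) * ?B)"
        by (intro mult_left_mono X) (use th in simp)
      finally show "\<bar>\<theta> ^ u * (\<Sum>r\<in>compositions k u. Bc k r * (\<Sum>js\<in>tle n u. Pc a r js * Dn \<theta> n (sum_list js)))\<bar>
          \<le> \<theta> ^ u * (\<Sum>r\<in>compositions k u. Bc k r) * real m ^ k * 2 ^ u * K3 \<theta> * 2 ^ k * (1 + ln (real n) ^ k) * ?B"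
        by (simp add: algebra_simps)
    qed
    also have "\<dots> = C * (1 + ln (real n) ^ k) * ?B"
      unfolding C_def by (simp only: sum_distrib_right)
    also have "\<dots> = C * (1 + ln (real n) ^ k) / real n powr min 1 \<theta>" by simp
    finally show "\<bar>?E - main_term \<theta> k a n\<bar> \<le> C * (1 + ln (real n) ^ k) / real n powr min 1 \<theta>" .
  qed
qed

end
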